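(* Let $\varphi:\mathbb{R}^n\to\mathbb{R}$ be of class $\mathcal{C}^{1,1}$ and let $x^0\in\mathbb{R}^n$ be such that, with $\Omega:=\{x\in\mathbb{R}^n\mid \varphi(x)\le\varphi(x^0)\}$: (1) for every $x\in\Omega$ the mapping $\partial^2\varphi(x)$ is positive-definite, i.e. $\langle z,u\rangle>0$ for all $u\neq 0$ and all $z\in\partial^2\varphi(x)(u)$; (2) $\Omega$ is bounded. Then every sequence $\{x^k\}$ generated by the Generalized Damped Newton Algorithm (with parameters $\sigma\in(0,\tfrac12)$, $\beta\in(0,1)$) from the starting point $x^0$ is convergent, and its limit is a tilt-stable local minimizer of $\varphi$.
   Context: A function $\varphi:\mathbb{R}^n\to\mathbb{R}$ is of class $\mathcal{C}^{1,1}$ if it is continuously differentiable and $\nabla\varphi$ is Lipschitz continuous around every point. For $\Omega\subset\mathbb{R}^s$ and $\bar z\in\Omega$, the regular normal cone is $\widehat N_\Omega(\bar z):=\{v\mid \limsup_{z\to\bar z,\,z\in\Omega}\langle v,z-\bar z\rangle/\|z-\bar z\|\le 0\}$ and the limiting normal cone $N_\Omega(\bar z)$ is the set of all $v$ for which there exist $z_k\to\bar z$ with $z_k\in\Omega$ and $v_k\to v$ with $v_k\in\widehat N_\Omega(z_k)$. For a set-valued map $F:\mathbb{R}^n\rightrightarrows\mathbb{R}^m$ and $(\bar x,\bar y)\in\operatorname{gph}F$, the coderivative is $D^*F(\bar x,\bar y)(v):=\{u\mid (u,-v)\in N_{\operatorname{gph}F}(\bar x,\bar y)\}$. For $\varphi$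 of class $\mathcal{C}^{1,1}$, the second-order subdifferential (generalized Hessian) is $\partial^2\varphi(x)(u):=D^*(\nabla\varphi)(x,\nabla\varphi(x))(u)$, $u\in\mathbb{R}^n$. A point $\bar x$ is a tilt-stable local minimizer of $\varphi$ if there is $\gamma>0$ such that the map $M_\gamma(v):=\operatorname{argmin}\{\varphi(x)-\langle v,x\rangle\mid x\in\mathbb{B}_\gamma(\bar x)\}$ is single-valued and Lipschitz continuous on a neighborhood of $0$ with $M_\gamma(0)=\{\bar x\}$. Generalized Damped Newton Algorithm: given $\sigma\in(0,\tfrac12)$, $\beta\in(0,1)$ and $x^0$, set $k=0$. If $\nabla\varphi(x^k)=0$ stop. Otherwise choose $d^k$ with $-\nabla\varphi(x^k)\in\partial^2\varphi(x^k)(d^k)$; set $\tau_k=1$ and, while $\varphi(x^k+\tau_kd^k)>\varphi(x^k)+\sigma\tau_k\langle\nabla\varphi(x^k),d^k\rangle$, replace $\tau_k$ by $\beta\tau_k$; set $x^{k+1}:=x^k+\tau_kd^k$, increase $k$ by 1 and repeat. *)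

theory Defs
  imports "HOL-Analysis.Analysis"
begin

definition grad :: "('a::euclidean_space \<Rightarrow> real) \<Rightarrow> 'a \<Rightarrow> 'a" where
  "grad \<phi> x = (THE D. GDERIV \<phi> x :> D)"

definition C11 :: "('a::euclidean_space \<Rightarrow> real) \<Rightarrow> bool" where
  "C11 \<phi> \<longleftrightarrow> (\<forall>x. \<phi> differentiable (at x)) \<and> continuous_on UNIV (grad \<phi>) \<and>
     (\<forall>x. \<exists>U L. open U \<and> x \<in> U \<and> L-lipschitz_on U (grad \<phi>))"

text \<open>Regular (Frechet) normal cone: limsup_{z -> zb, z in Omega} <v, z - zb>/|z - zb| <= 0,
  written out.\<close>
definition regular_normal_cone :: "'a::euclidean_space set \<Rightarrow> 'a \<Rightarrow> 'a set" where
  "regular_normal_cone \<Omega> zb = {v. \<forall>\<epsilon>>0. \<exists>\<delta>>0. \<forall>z\<in>\<Omega>. 0 < dist z zb \<and> dist z zb < \<delta> \<longrightarrow>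
      inner v (z - zb) \<le> \<epsilon> * norm (z - zb)}"

definition limiting_normal_cone :: "'a::euclidean_space set \<Rightarrow> 'a \<Rightarrow> 'a set" where
  "limiting_normal_cone \<Omega> zb = {v. \<exists>z w. (\<forall>k. z k \<in> \<Omega>) \<and> z \<longlonglongrightarrow> zb \<and>
      w \<longlonglongrightarrow> v \<and> (\<forall>k. w k \<in> regular_normal_cone \<Omega> (z k))}"

definition graph :: "('a \<Rightarrow> 'b set) \<Rightarrow> ('a \<times> 'b) set" where
  "graph F = {(x, y). y \<in> F x}"

definition coderivative ::
  "('a::euclidean_space \<Rightarrow> 'b::euclidean_space set) \<Rightarrow> 'a \<Rightarrow> 'b \<Rightarrow> 'b \<Rightarrow> 'a set" where
  "coderivative F x y v = {u. (u, - v) \<in> limiting_normal_cone (graph F) (x, y)}"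

definition second_subdiff :: "('a::euclidean_space \<Rightarrow> real) \<Rightarrow> 'a \<Rightarrow> 'a \<Rightarrow> 'a set" where
  "second_subdiff \<phi> x u = coderivative (\<lambda>y. {grad \<phi> y}) x (grad \<phi> x) u"

definition tilt_argmin :: "('a::euclidean_space \<Rightarrow> real) \<Rightarrow> 'a \<Rightarrow> real \<Rightarrow> 'a \<Rightarrow> 'a set" where
  "tilt_argmin \<phi> xb \<gamma> v = {x \<in> cball xb \<gamma>. \<forall>y\<in>cball xb \<gamma>. \<phi> x - inner v x \<le> \<phi> y - inner v y}"

definition tilt_stable_local_min :: "('a::euclidean_space \<Rightarrow> real) \<Rightarrow> 'a \<Rightarrow> bool" where
  "tilt_stable_local_min \<phi> xb \<longleftrightarrow> (\<exists>\<gamma>>0. \<exists>U m L. open U \<and> 0 \<in> U \<and>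
      (\<forall>v\<in>U. tilt_argmin \<phi> xb \<gamma> v = {m v}) \<and> L-lipschitz_on U m \<and>
      tilt_argmin \<phi> xb \<gamma> 0 = {xb})"

definition armijo :: "('a::euclidean_space \<Rightarrow> real) \<Rightarrow> real \<Rightarrow> real \<Rightarrow> 'a \<Rightarrow> 'a \<Rightarrow> nat \<Rightarrow> bool" where
  "armijo \<phi> \<sigma> \<beta> x d j \<longleftrightarrow>
     \<phi> (x + (\<beta> ^ j) *\<^sub>R d) \<le> \<phi> x + \<sigma> * (\<beta> ^ j) * inner (grad \<phi> x) d"

text \<open>If the algorithm stops at iteration k (grad = 0), the sequence is continued
  constantly; backtracking yields tau_k = beta^j with j the first index
  satisfying the Armijo condition.\<close>
definition gdna_sequence ::
  "('a::euclidean_space \<Rightarrow> real) \<Rightarrow> real \<Rightarrow> real \<Rightarrow> 'a \<Rightarrow> (nat \<Rightarrow> 'a) \<Rightarrow> bool" where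
  "gdna_sequence \<phi> \<sigma> \<beta> x0 x \<longleftrightarrow> x 0 = x0 \<and>
     (\<forall>k. if grad \<phi> (x k) = 0 then x (Suc k) = x k
          else (\<exists>d j. - grad \<phi> (x k) \<in> second_subdiff \<phi> (x k) d \<and>
                  armijo \<phi> \<sigma> \<beta> (x k) d j \<and> (\<forall>i<j. \<not> armijo \<phi> \<sigma> \<beta> (x k) d i) \<and>
                  x (Suc k) = x k + (\<beta> ^ j) *\<^sub>R d))"

end

theory Submission
  imports Defs
begin

lemma linear_inner_repr:
  fixes D :: "'a::euclidean_space \<Rightarrow> real"
  assumes "linear D"
  shows "D h = inner h (\<Sum>b\<in>Basis. D b *\<^sub>R b)"
proof -
  have "D h = D (\<Sum>b\<in>Basis. (inner h b) *\<^sub>R b)" by (simp only: euclidean_representation)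
  also have "\<dots> = (\<Sum>b\<in>Basis. (inner h b) * D b)"
    using assms by (simp only: linear_sum linear_scale real_scaleR_def)
  also have "\<dots> = inner h (\<Sum>b\<in>Basis. D b *\<^sub>R b)"
    unfolding inner_sum_right by (rule sum.cong) (simp_all add: mult.commute)
  finally show ?thesis .
qed

lemma grad_works:
  fixes \<phi> :: "'a::euclidean_space \<Rightarrow> real"
  assumes "\<phi> differentiable (at x)"
  shows "(\<phi> has_derivative (\<lambda>h. inner h (grad \<phi> x))) (at x)"
proof -
  obtain D where D: "(\<phi> has_derivative D) (at x)" using assms by (auto simp: differentiable_def)
  have lin: "linear D" using has_derivative_bounded_linear[OF D] by (rule bounded_linear.linear)
  define g where "g = (\<Sum>b\<in>Basis. D b *\<^sub>R b)"
  have Dg: "D = (\<lambda>h. inner h g)" unfolding g_def by (rule ext) (rule linear_inner_repr[OF lin])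
  have ex: "GDERIV \<phi> x :> g" using D Dg by (simp add: gderiv_def)
  have uniq: "d = g" if "GDERIV \<phi> x :> d" for d
  proof -
    have "(\<lambda>h. inner h d) = (\<lambda>h. inner h g)"
      by (rule has_derivative_unique) (use that ex in \<open>simp_all add: gderiv_def\<close>)
    from fun_cong[OF this, of "d - g"] have "inner (d - g) d = inner (d - g) g" .
    then have "inner (d - g) (d - g) = 0" by (simp add: inner_diff_right)
    then show ?thesis by simp
  qed
  have "grad \<phi> x = g" unfolding grad_def using ex uniq by (rule the_equality)
  then show ?thesis using ex by (simp add: gderiv_def)
qed

lemma line_deriv:
  fixes \<phi> :: "'a::euclidean_space \<Rightarrow> real"
  assumes "\<forall>x. \<phi> differentiable (at x)"
  shows "((\<lambda>t. \<phi> (x + t *\<^sub>R d)) has_real_derivative inner (grad \<phi> (x + t *\<^sub>R d)) d) (at t)"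
proof -
  have 1: "((\<lambda>t. x + t *\<^sub>R d) has_derivative (\<lambda>s. s *\<^sub>R d)) (at t)"
    by (auto intro!: derivative_eq_intros)
  have 2: "(\<phi> has_derivative (\<lambda>h. inner h (grad \<phi> (x + t *\<^sub>R d)))) (at (x + t *\<^sub>R d))"
    by (rule grad_works) (use assms in blast)
  have "((\<lambda>t. \<phi> (x + t *\<^sub>R d)) has_derivative (\<lambda>s. inner (s *\<^sub>R d) (grad \<phi> (x + t *\<^sub>R d)))) (at t)"
    using has_derivative_compose[OF 1 2] by (simp add: o_def)
  then show ?thesis
    unfolding has_field_derivative_def
  proof (rule has_derivative_eq_rhs)
    show "(\<lambda>s. inner (s *\<^sub>R d) (grad \<phi> (x + t *\<^sub>R d))) = (*) (inner (grad \<phi> (x + t *\<^sub>R d)) d)"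
      by (rule ext) (simp add: inner_commute[of d])
  qed
qed

lemma phi_mvt:
  fixes \<phi> :: "'a::euclidean_space \<Rightarrow> real"
  assumes "\<forall>x. \<phi> differentiable (at x)"
  shows "\<exists>s. 0 \<le> s \<and> s \<le> 1 \<and> \<phi> (x + d) - \<phi> x = inner (grad \<phi> (x + s *\<^sub>R d)) d"
proof -
  let ?g = "\<lambda>t. \<phi> (x + t *\<^sub>R d)"
  have D: "\<And>t. (?g has_real_derivative inner (grad \<phi> (x + t *\<^sub>R d)) d) (at t)"
    using line_deriv[OF assms] by blast
  have cont: "continuous_on {0..1} ?g"
  proof (rule continuous_at_imp_continuous_on, intro ballI)
    fix t :: real show "isCont ?g t" using D[of t] by (rule DERIV_isCont)
  qed
  have "\<exists>l z. 0 < z \<and> z < 1 \<and> DERIV ?g z :> l \<and> ?g 1 - ?g 0 = (1 - 0) * l"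
  proof (rule MVT)
    show "0 < (1::real)" by simp
    show "continuous_on {0..1} ?g" by (rule cont)
    fix t :: real
    show "?g differentiable (at t)" using D[of t] real_differentiable_def by blast
  qed
  then obtain l z where z: "0 < z" "z < 1" "DERIV ?g z :> l" "?g 1 - ?g 0 = l" by auto
  have "l = inner (grad \<phi> (x + z *\<^sub>R d)) d" using DERIV_unique[OF z(3) D] .
  then have "\<phi> (x + d) - \<phi> x = inner (grad \<phi> (x + z *\<^sub>R d)) d" using z(4) by simp
  moreover have "0 \<le> z" "z \<le> 1" using z(1,2) by auto
  ultimately show ?thesis by blast
qed

lemma phi_cont:
  fixes \<phi> :: "'a::euclidean_space \<Rightarrow> real"
  assumes "\<forall>x. \<phi> differentiable (at x)"
  shows "continuous_on S \<phi>"
  proof (rule continuous_at_imp_continuous_on, intro ballI)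
  fix x show "isCont \<phi> x" using assms differentiable_imp_continuous_within by blast
qed

definition RN :: "('a::euclidean_space \<Rightarrow> 'a) \<Rightarrow> 'a \<Rightarrow> 'a \<Rightarrow> 'a \<Rightarrow> bool" where
  "RN f x w v \<longleftrightarrow> (w, -v) \<in> regular_normal_cone (graph (\<lambda>y. {f y})) (x, f x)"

lemma graph_single: "z \<in> graph (\<lambda>y. {f y}) \<longleftrightarrow> snd z = f (fst z)"
  by (cases z) (auto simp: graph_def)

lemma RN_D:
  assumes "RN f x w v" "0 < e"
  obtains \<delta> where "\<delta> > 0" "\<And>y. 0 < dist (y, f y) (x, f x) \<Longrightarrow> dist (y, f y) (x, f x) < \<delta> \<Longrightarrow>
      inner w (y - x) - inner v (f y - f x) \<le> e * norm (y - x, f y - f x)"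
proof -
  from assms obtain \<delta> where d: "\<delta> > 0" and H: "\<forall>z\<in>graph (\<lambda>y. {f y}). 0 < dist z (x, f x) \<and> dist z (x, f x) < \<delta> \<longrightarrow>
      inner (w, -v) (z - (x, f x)) \<le> e * norm (z - (x, f x))"
    unfolding RN_def regular_normal_cone_def by blast
  show ?thesis
  proof (rule that[OF d])
    fix y assume "0 < dist (y, f y) (x, f x)" "dist (y, f y) (x, f x) < \<delta>"
    moreover have "(y, f y) \<in> graph (\<lambda>y. {f y})" by (simp add: graph_def)
    ultimately have "inner (w, -v) ((y, f y) - (x, f x)) \<le> e * norm ((y, f y) - (x, f x))"
      using H by blast
    then show "inner w (y - x) - inner v (f y - f x) \<le> e * norm (y - x, f y - f x)"
      by simp
  qed
qed

lemma RN_I: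
  assumes "\<And>e. 0 < e \<Longrightarrow> \<exists>\<delta>>0. \<forall>y. 0 < dist (y, f y) (x, f x) \<and> dist (y, f y) (x, f x) < \<delta> \<longrightarrow>
      inner w (y - x) - inner v (f y - f x) \<le> e * norm (y - x, f y - f x)"
  shows "RN f x w v"
  unfolding RN_def regular_normal_cone_def
proof (intro CollectI allI impI)
  fix e :: real assume "0 < e"
  then obtain \<delta> where d: "\<delta> > 0" and H: "\<forall>y. 0 < dist (y, f y) (x, f x) \<and> dist (y, f y) (x, f x) < \<delta> \<longrightarrow>
      inner w (y - x) - inner v (f y - f x) \<le> e * norm (y - x, f y - f x)"
    using assms by blast
  show "\<exists>\<delta>>0. \<forall>z\<in>graph (\<lambda>y. {f y}). 0 < dist z (x, f x) \<and> dist z (x, f x) < \<delta> \<longrightarrow>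
      inner (w, -v) (z - (x, f x)) \<le> e * norm (z - (x, f x))"
  proof (intro exI[of _ \<delta>] conjI ballI impI)
    show "\<delta> > 0" by (rule d)
    fix z assume z: "z \<in> graph (\<lambda>y. {f y})" and zd: "0 < dist z (x, f x) \<and> dist z (x, f x) < \<delta>"
    obtain y where zy: "z = (y, f y)" using z graph_single by (metis prod.collapse)
    have "inner w (y - x) - inner v (f y - f x) \<le> e * norm (y - x, f y - f x)"
      using H zd zy by blast
    then show "inner (w, -v) (z - (x, f x)) \<le> e * norm (z - (x, f x))"
      using zy by simp
  qed
qed

lemma RN_scale:
  assumes "RN f x w v" "0 < c"
  shows "RN f x (c *\<^sub>R w) (c *\<^sub>R v)"
proof (rule RN_I)
  fix e :: real assume e: "0 < e"
  obtain \<delta> where d: "\<delta> > 0" and H: "\<And>y. 0 < dist (y, f y) (x, f x) \<Longrightarrow> dist (y, f y) (x, f x) < \<delta> \<Longrightarrow>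
      inner w (y - x) - inner v (f y - f x) \<le> (e / c) * norm (y - x, f y - f x)"
    using RN_D[OF assms(1), of "e / c"] e assms(2) by auto
  show "\<exists>\<delta>>0. \<forall>y. 0 < dist (y, f y) (x, f x) \<and> dist (y, f y) (x, f x) < \<delta> \<longrightarrow>
      inner (c *\<^sub>R w) (y - x) - inner (c *\<^sub>R v) (f y - f x) \<le> e * norm (y - x, f y - f x)"
  proof (intro exI[of _ \<delta>] conjI allI impI)
    show "\<delta> > 0" by (rule d)
    fix y assume "0 < dist (y, f y) (x, f x) \<and> dist (y, f y) (x, f x) < \<delta>"
    then have "inner w (y - x) - inner v (f y - f x) \<le> (e / c) * norm (y - x, f y - f x)"
      using H by blast
    then have "c * (inner w (y - x) - inner v (f y - f x)) \<le> c * ((e / c) * norm (y - x, f y - f x))"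
      by (rule mult_left_mono) (use assms(2) in simp)
    also have "c * ((e / c) * norm (y - x, f y - f x)) = e * norm (y - x, f y - f x)"
      using assms(2) by simp
    finally show "inner (c *\<^sub>R w) (y - x) - inner (c *\<^sub>R v) (f y - f x) \<le> e * norm (y - x, f y - f x)"
      using assms(2) by (simp add: algebra_simps)
  qed
qed

lemma RN_bound:
  fixes f :: "'a::euclidean_space \<Rightarrow> 'a"
  assumes V: "open V" "x \<in> V" and lip: "L-lipschitz_on V f" and rn: "RN f x w v"
  shows "norm w \<le> L * norm v"
proof (rule field_le_epsilon)
  fix e :: real assume e: "0 < e"
  have L0: "0 \<le> L" using lip lipschitz_on_nonneg by blast
  define \<epsilon> where "\<epsilon> = e / (1 + L)"
  have eps: "0 < \<epsilon>" using e L0 by (simp add: \<epsilon>_def)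
  obtain \<delta> where d: "\<delta> > 0" and H: "\<And>y. 0 < dist (y, f y) (x, f x) \<Longrightarrow> dist (y, f y) (x, f x) < \<delta> \<Longrightarrow>
      inner w (y - x) - inner v (f y - f x) \<le> \<epsilon> * norm (y - x, f y - f x)"
    using RN_D[OF rn eps] by blast
  show "norm w \<le> L * norm v + e"
  proof (cases "w = 0")
    case True then show ?thesis using L0 e by simp
  next
    case False
    obtain r where r: "r > 0" "ball x r \<subseteq> V" using V open_contains_ball by blast
    define t where "t = min (\<delta> / (2 * (1 + L))) (r / 2)"
    have t0: "t > 0" using d r L0 by (simp add: t_def)
    define u where "u = (t / norm w) *\<^sub>R w"
    have nu: "norm u = t" using False t0 by (simp add: u_def)
    define y where "y = x + u"
    have yV: "y \<in> V" using r nu t0 by (auto simp: y_def dist_norm t_def)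
    have fy: "norm (f y - f x) \<le> L * t"
      using lipschitz_on_normD[OF lip yV V(2)] nu by (simp add: y_def)
    have nP: "norm (y - x, f y - f x) \<le> t + L * t"
      using norm_Pair_le[of "y - x" "f y - f x"] fy nu by (simp add: y_def)
    have "t + L * t = t * (1 + L)" by (simp add: algebra_simps)
    also have "\<dots> \<le> (\<delta> / (2 * (1 + L))) * (1 + L)"
      by (rule mult_right_mono) (use L0 in \<open>auto simp: t_def\<close>)
    also have "\<dots> = \<delta> / 2" using L0 by (simp add: field_simps)
    also have "\<dots> < \<delta>" using d by simp
    finally have dlt: "dist (y, f y) (x, f x) < \<delta>" using nP by (simp add: dist_norm)
    have "0 < norm (y - x)" using nu t0 by (simp add: y_def)
    also have "norm (y - x) \<le> norm (y - x, f y - f x)" by (simp add: norm_Pair)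
    finally have dgt: "0 < dist (y, f y) (x, f x)" by (simp add: dist_norm)
    have main: "inner w (y - x) - inner v (f y - f x) \<le> \<epsilon> * norm (y - x, f y - f x)"
      using H[OF dgt dlt] .
    have iw: "inner w (y - x) = t * norm w"
      using False by (simp add: y_def u_def power2_norm_eq_inner[symmetric] power2_eq_square)
    have iv: "inner v (f y - f x) \<le> norm v * (L * t)"
    proof -
      have "norm v * norm (f y - f x) \<le> norm v * (L * t)" using fy by (simp add: mult_left_mono)
      then show ?thesis using Cauchy_Schwarz_ineq2[of v "f y - f x"] by linarith
    qed
    have "\<epsilon> * norm (y - x, f y - f x) \<le> \<epsilon> * (t * (1 + L))"
    proof -
      have "norm (y - x, f y - f x) \<le> t * (1 + L)" using nP by (simp add: algebra_simps)
      then show ?thesis using eps by (rule mult_left_mono[OF _ less_imp_le])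
    qed
    also have "\<dots> = t * e" using L0 by (simp add: \<epsilon>_def field_simps)
    finally have "t * norm w \<le> t * (L * norm v + e)"
      using main iw iv by (simp add: algebra_simps)
    then show ?thesis using t0 by simp
  qed
qed

lemma prox_RN:
  fixes f :: "'a::euclidean_space \<Rightarrow> 'a"
  assumes d: "\<delta> > 0"
    and H: "\<And>y. dist y x < \<delta> \<Longrightarrow> inner v (f y) - inner v (f x) \<ge> inner w (y - x) - C * (norm (y - x))\<^sup>2"
  shows "RN f x w v"
proof (rule RN_I)
  fix e :: real assume e: "0 < e"
  define C' where "C' = \<bar>C\<bar> + 1"
  have C': "C' > 0" "C \<le> C'" by (auto simp: C'_def)
  define \<delta>' where "\<delta>' = min \<delta> (e / C')"
  have d': "\<delta>' > 0" using d e C' by (simp add: \<delta>'_def)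
  show "\<exists>\<delta>>0. \<forall>y. 0 < dist (y, f y) (x, f x) \<and> dist (y, f y) (x, f x) < \<delta> \<longrightarrow>
      inner w (y - x) - inner v (f y - f x) \<le> e * norm (y - x, f y - f x)"
  proof (intro exI[of _ \<delta>'] conjI allI impI)
    show "\<delta>' > 0" by (rule d')
    fix y assume "0 < dist (y, f y) (x, f x) \<and> dist (y, f y) (x, f x) < \<delta>'"
    then have yd: "dist (y, f y) (x, f x) < \<delta>'" by blast
    have n1: "norm (y - x) \<le> norm (y - x, f y - f x)" by (simp add: norm_Pair)
    have ny: "norm (y - x) < \<delta>'" using yd n1 by (simp add: dist_norm)
    then have "dist y x < \<delta>" by (simp add: dist_norm \<delta>'_def)
    from H[OF this] have h: "inner w (y - x) - inner v (f y - f x) \<le> C * (norm (y - x))\<^sup>2"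
      unfolding inner_diff_right by linarith
    have "C * (norm (y - x))\<^sup>2 \<le> C' * (norm (y - x) * norm (y - x))"
      using C' by (simp add: power2_eq_square mult_right_mono)
    also have "\<dots> \<le> C' * (\<delta>' * norm (y - x))"
      using ny C' by (intro mult_left_mono mult_right_mono) auto
    also have "\<dots> \<le> C' * ((e / C') * norm (y - x))"
      using C' by (intro mult_left_mono mult_right_mono) (auto simp: \<delta>'_def)
    also have "\<dots> = e * norm (y - x)" using C' by simp
    also have "\<dots> \<le> e * norm (y - x, f y - f x)" using n1 e by simp
    finally show "inner w (y - x) - inner v (f y - f x) \<le> e * norm (y - x, f y - f x)" using h by linarith
  qed
qed

lemma LN_closed:
  fixes f :: "'a::euclidean_space \<Rightarrow> 'a"
  assumes ln: "(w, -v) \<in> limiting_normal_cone (graph (\<lambda>y. {f y})) (x, f x)"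
    and V: "open V" "x \<in> V" and Cc: "closed S"
    and H: "\<And>y w v. y \<in> V \<Longrightarrow> RN f y w v \<Longrightarrow> (w, -v) \<in> S"
  shows "(w, -v) \<in> S"
proof -
  from ln obtain z ww where z: "\<And>k. z k \<in> graph (\<lambda>y. {f y})" and zl: "z \<longlonglongrightarrow> (x, f x)"
    and wl: "ww \<longlonglongrightarrow> (w, -v)" and wr: "\<And>k. ww k \<in> regular_normal_cone (graph (\<lambda>y. {f y})) (z k)"
    unfolding limiting_normal_cone_def by blast
  have zk: "z k = (fst (z k), f (fst (z k)))" for k using z[of k] graph_single by (metis prod.collapse)
  have "(\<lambda>k. fst (z k)) \<longlonglongrightarrow> fst (x, f x)" using zl by (rule tendsto_fst)
  then have "eventually (\<lambda>k. fst (z k) \<in> V) sequentially" using V by (simp add: topological_tendstoD)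
  then have ev: "eventually (\<lambda>k. ww k \<in> S) sequentially"
  proof (rule eventually_mono)
    fix k assume k: "fst (z k) \<in> V"
    have "RN f (fst (z k)) (fst (ww k)) (- snd (ww k))"
      unfolding RN_def using wr[of k] zk[of k] by simp
    from H[OF k this] show "ww k \<in> S" by simp
  qed
  show ?thesis by (rule Lim_in_closed_set[OF Cc ev _ wl]) simp
qed

lemma LN_bound:
  fixes f :: "'a::euclidean_space \<Rightarrow> 'a"
  assumes ln: "(w, -v) \<in> limiting_normal_cone (graph (\<lambda>y. {f y})) (x, f x)"
    and V: "open V" "x \<in> V" and lip: "L-lipschitz_on V f"
  shows "norm w \<le> L * norm v"
proof -
  let ?S = "{p::'a\<times>'a. norm (fst p) \<le> L * norm (snd p)}"
  have "closed ?S" by (intro closed_Collect_le continuous_intros)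
  have "(w, -v) \<in> ?S"
  proof (rule LN_closed[OF ln V \<open>closed ?S\<close>])
    fix y w v assume "y \<in> V" "RN f y w v"
    then show "(w, -v) \<in> ?S" using RN_bound[OF V(1) _ lip] by simp
  qed
  then show ?thesis by simp
qed

lemma LN_kappa:
  fixes f :: "'a::euclidean_space \<Rightarrow> 'a"
  assumes ln: "(w, -v) \<in> limiting_normal_cone (graph (\<lambda>y. {f y})) (x, f x)"
    and d: "\<delta> > 0"
    and H: "\<And>y w v. dist y x < \<delta> \<Longrightarrow> RN f y w v \<Longrightarrow> inner w v \<ge> \<kappa> * (norm v)\<^sup>2"
  shows "inner w v \<ge> \<kappa> * (norm v)\<^sup>2"
proof -
  let ?S = "{p::'a\<times>'a. \<kappa> * (norm (snd p))\<^sup>2 \<le> - inner (fst p) (snd p)}"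
  have "closed ?S" by (intro closed_Collect_le continuous_intros)
  have "(w, -v) \<in> ?S"
  proof (rule LN_closed[OF ln _ _ \<open>closed ?S\<close>, of "ball x \<delta>"])
    show "open (ball x \<delta>)" "x \<in> ball x \<delta>" using d by auto
    fix y w v assume "y \<in> ball x \<delta>" "RN f y w v"
    then show "(w, -v) \<in> ?S" using H[of y w v] by (simp add: dist_commute)
  qed
  then show ?thesis by simp
qed

lemma unif_step1:
  fixes \<phi> :: "'a::euclidean_space \<Rightarrow> real"
  assumes cont: "continuous_on UNIV (grad \<phi>)" and K: "compact K"
    and posdef: "\<forall>x\<in>K. \<forall>u z. u \<noteq> 0 \<and> z \<in> second_subdiff \<phi> x u \<longrightarrow> inner z u > 0"
    and V: "open V" "\<And>x y. y \<in> K \<Longrightarrow> dist x y < 1 \<Longrightarrow> x \<in> V"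
    and lip: "L-lipschitz_on V (grad \<phi>)"
  shows "\<exists>\<delta>>0. \<exists>\<kappa>>0. \<forall>x y w v. y \<in> K \<longrightarrow> dist x y < \<delta> \<longrightarrow> RN (grad \<phi>) x w v \<longrightarrow> inner w v \<ge> \<kappa> * (norm v)\<^sup>2"
proof (rule ccontr)
  let ?f = "grad \<phi>"
  assume "\<not> ?thesis"
  then have "\<forall>n::nat. \<exists>x y w v. y \<in> K \<and> dist x y < 1 / Suc n \<and> RN ?f x w v \<and> inner w v < 1 / Suc n * (norm v)\<^sup>2"
    by (metis (no_types, lifting) not_le of_nat_0_less_iff zero_less_Suc zero_less_divide_1_iff)
  then obtain X Y W U where XY: "\<And>n. Y n \<in> K" "\<And>n. dist (X n) (Y n) < 1 / Suc n"
    and RNn: "\<And>n. RN ?f (X n) (W n) (U n)" and inn: "\<And>n. inner (W n) (U n) < 1 / Suc n * (norm (U n))\<^sup>2"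
    by metis
  have U0: "U n \<noteq> 0" for n using inn[of n] by auto
  define W' where "W' n = (1 / norm (U n)) *\<^sub>R W n" for n
  define U' where "U' n = (1 / norm (U n)) *\<^sub>R U n" for n
  have RN': "RN ?f (X n) (W' n) (U' n)" for n
    unfolding W'_def U'_def by (rule RN_scale[OF RNn]) (simp add: U0)
  have nU': "norm (U' n) = 1" for n using U0[of n] by (simp add: U'_def)
  have inn': "inner (W' n) (U' n) < 1 / Suc n" for n
  proof -
    have "inner (W' n) (U' n) = inner (W n) (U n) / (norm (U n))\<^sup>2"
      by (simp add: W'_def U'_def power2_eq_square)
    also have "\<dots> < 1 / Suc n" using inn[of n] U0[of n] by (simp add: divide_less_eq)
    finally show ?thesis .
  qed
  have XV: "X n \<in> V" for n
  proof -
    have "1 / real (Suc n) \<le> 1" by simp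
    then have "dist (X n) (Y n) < 1" using XY(2)[of n] by linarith
    then show ?thesis by (rule V(2)[OF XY(1)])
  qed
  have nW': "norm (W' n) \<le> L" for n using RN_bound[OF V(1) XV lip RN'[of n]] nU'[of n] by simp
  obtain B where B: "\<And>x. x \<in> K \<Longrightarrow> norm x \<le> B"
    using compact_imp_bounded[OF K] by (auto simp: bounded_iff)
  define s where "s n = (Y n, (W' n, U' n))" for n
  have "bounded (range s)"
    unfolding bounded_iff
  proof (intro exI ballI)
    fix p assume "p \<in> range s"
    then obtain n where p: "p = s n" by auto
    have "norm p \<le> norm (Y n) + (norm (W' n) + norm (U' n))"
      unfolding p s_def by (meson add_left_mono norm_Pair_le order_trans)
    also have "\<dots> \<le> B + (L + 1)" using B[OF XY(1)[of n]] nW'[of n] nU'[of n] by linarith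
    finally show "norm p \<le> B + (L + 1)" .
  qed
  then obtain l r where r: "strict_mono r" and lim: "(s \<circ> r) \<longlonglongrightarrow> l"
    using bounded_imp_convergent_subsequence by blast
  obtain yb wb ub where l: "l = (yb, (wb, ub))" by (metis prod.collapse)
  have limY: "(\<lambda>n. Y (r n)) \<longlonglongrightarrow> yb" using tendsto_fst[OF lim] by (simp add: l s_def o_def)
  have limW: "(\<lambda>n. W' (r n)) \<longlonglongrightarrow> wb" using tendsto_fst[OF tendsto_snd[OF lim]] by (simp add: l s_def o_def)
  have limU: "(\<lambda>n. U' (r n)) \<longlonglongrightarrow> ub" using tendsto_snd[OF tendsto_snd[OF lim]] by (simp add: l s_def o_def)
  have ybK: "yb \<in> K"
    by (rule Lim_in_closed_set[OF compact_imp_closed[OF K] _ _ limY]) (auto simp: XY(1))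
  have rn: "r n \<ge> n" for n using r by (simp add: strict_mono_imp_increasing)
  have invle: "1 / real (Suc (r n)) \<le> inverse (real (Suc n))" for n
    using rn[of n] by (simp add: divide_simps)
  have "(\<lambda>n. X (r n) - Y (r n)) \<longlonglongrightarrow> 0"
  proof (rule Lim_null_comparison[OF _ LIMSEQ_inverse_real_of_nat])
    show "\<forall>\<^sub>F n in sequentially. norm (X (r n) - Y (r n)) \<le> inverse (real (Suc n))"
    proof (rule always_eventually, rule allI)
      fix n
      have "norm (X (r n) - Y (r n)) < 1 / real (Suc (r n))" using XY(2)[of "r n"] by (simp add: dist_norm)
      then show "norm (X (r n) - Y (r n)) \<le> inverse (real (Suc n))" using invle[of n] by linarith
    qed
  qed
  from tendsto_add[OF this limY] have limX: "(\<lambda>n. X (r n)) \<longlonglongrightarrow> yb" by simp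
  have nub: "norm ub = 1"
  proof -
    have "(\<lambda>n. norm (U' (r n))) \<longlonglongrightarrow> norm ub" using limU by (rule tendsto_norm)
    then show ?thesis using nU' by (simp add: LIMSEQ_const_iff)
  qed
  have inb: "inner wb ub \<le> 0"
  proof (rule tendsto_le[OF _ LIMSEQ_inverse_real_of_nat tendsto_inner[OF limW limU]])
    show "sequentially \<noteq> bot" by simp
    show "\<forall>\<^sub>F n in sequentially. inner (W' (r n)) (U' (r n)) \<le> inverse (real (Suc n))"
    proof (rule always_eventually, rule allI)
      fix n
      show "inner (W' (r n)) (U' (r n)) \<le> inverse (real (Suc n))" using inn'[of "r n"] invle[of n] by linarith
    qed
  qed
  have ln: "(wb, - ub) \<in> limiting_normal_cone (graph (\<lambda>y. {?f y})) (yb, ?f yb)"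
    unfolding limiting_normal_cone_def
  proof (intro CollectI exI conjI allI)
    show "(X (r k), ?f (X (r k))) \<in> graph (\<lambda>y. {?f y})" for k by (simp add: graph_def)
    have "isCont ?f yb" using cont by (simp add: continuous_on_eq_continuous_at)
    then have "(\<lambda>n. ?f (X (r n))) \<longlonglongrightarrow> ?f yb" using limX by (rule isCont_tendsto_compose)
    then show "(\<lambda>k. (X (r k), ?f (X (r k)))) \<longlonglongrightarrow> (yb, ?f yb)" using limX by (intro tendsto_Pair)
    show "(\<lambda>k. (W' (r k), - U' (r k))) \<longlonglongrightarrow> (wb, - ub)" using limW limU by (intro tendsto_Pair tendsto_minus)
    show "(W' (r k), - U' (r k)) \<in> regular_normal_cone (graph (\<lambda>y. {?f y})) (X (r k), ?f (X (r k)))" for k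
      using RN'[of "r k"] by (simp add: RN_def)
  qed
  then have "wb \<in> second_subdiff \<phi> yb ub" by (simp add: second_subdiff_def coderivative_def)
  moreover have "ub \<noteq> 0" using nub by auto
  ultimately have "inner wb ub > 0" using posdef ybK by blast
  then show False using inb by simp
qed

lemma quad_lemma:
  fixes M Lp \<epsilon> s :: real
  assumes M: "M > 0" and Le: "Lp\<^sup>2 < \<epsilon> * M"
  shows "M * s\<^sup>2 - Lp * s > - \<epsilon> / 4"
proof -
  have eq: "4 * M * (M * s\<^sup>2 - Lp * s) = (2 * M * s - Lp)\<^sup>2 - Lp\<^sup>2"
    by (simp add: power2_eq_square algebra_simps)
  have "0 \<le> (2 * M * s - Lp)\<^sup>2" by simp
  then have "4 * M * (M * s\<^sup>2 - Lp * s) > - \<epsilon> * M" using eq Le by linarith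
  then have "M * (4 * (M * s\<^sup>2 - Lp * s) + \<epsilon>) > 0" by (simp add: algebra_simps)
  then have "4 * (M * s\<^sup>2 - Lp * s) + \<epsilon> > 0" using M by (simp add: zero_less_mult_iff)
  then show ?thesis by simp
qed

lemma cyl:
  fixes p :: "'a::euclidean_space \<Rightarrow> real" and a h :: 'a
  assumes h0: "h \<noteq> 0" and rho: "0 < \<rho>"
    and Sin: "\<And>t y. 0 \<le> t \<Longrightarrow> t \<le> 1 \<Longrightarrow> norm y \<le> \<rho> \<Longrightarrow> a + t *\<^sub>R h + y \<in> S"
    and lip: "Lp-lipschitz_on S p"
    and H: "\<And>x w C \<delta>. x \<in> S \<Longrightarrow> 0 < \<delta> \<Longrightarrow>
       (\<And>y. dist y x < \<delta> \<Longrightarrow> p y - p x \<ge> inner w (y - x) - C * (norm (y - x))\<^sup>2) \<Longrightarrow> c \<le> inner w h"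
    and mid: "p (a + (1/2) *\<^sub>R h) \<le> (p a + p (a + h)) / 2"
  shows "c \<le> p (a + h) - p a"
proof (rule ccontr)
  assume neg: "\<not> c \<le> p (a + h) - p a"
  define lam where "lam = p (a + h) - p a"
  have lc: "lam < c" using neg by (simp add: lam_def)
  define \<epsilon> where "\<epsilon> = (c - lam) / 2"
  have eps: "\<epsilon> > 0" using lc by (simp add: \<epsilon>_def)
  define nh where "nh = inner h h"
  have nh: "nh > 0" using h0 by (simp add: nh_def)
  define r where "r x = inner (x - a) h / nh" for x
  define P where "P x = x - a - r x *\<^sub>R h" for x
  have decomp: "x = a + r x *\<^sub>R h + P x" for x by (simp add: P_def)
  have Ph: "inner (P x) h = 0" for x
    using nh by (simp add: P_def r_def inner_diff_left nh_def)
  have r_lin: "r (a + t *\<^sub>R h + y) = t + inner y h / nh" for t y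
    using nh by (simp add: r_def inner_add_left nh_def field_simps)
  have P_lin: "inner y h = 0 \<Longrightarrow> P (a + t *\<^sub>R h + y) = y" for t y
    using r_lin[of t y] by (simp add: P_def)
  have Lp0: "Lp \<ge> 0" using lip lipschitz_on_nonneg by blast
  define M where "M = Lp / \<rho> + Lp\<^sup>2 / \<epsilon> + 1"
  have M0: "M > 0" using Lp0 rho eps by (simp add: M_def add_nonneg_pos)
  have Mrho: "M * \<rho> > Lp"
  proof -
    have "M * \<rho> = Lp + (Lp\<^sup>2 / \<epsilon>) * \<rho> + \<rho>" using rho by (simp add: M_def algebra_simps)
    moreover have "(Lp\<^sup>2 / \<epsilon>) * \<rho> \<ge> 0" using eps rho by simp
    ultimately show ?thesis using rho by linarith
  qed
  have Meps: "Lp\<^sup>2 < \<epsilon> * M"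
  proof -
    have "\<epsilon> * M = \<epsilon> * (Lp / \<rho>) + Lp\<^sup>2 + \<epsilon>" using eps by (simp add: M_def algebra_simps)
    moreover have "\<epsilon> * (Lp / \<rho>) \<ge> 0" using eps rho Lp0 by simp
    ultimately show ?thesis using eps by linarith
  qed
  define q where "q x = p x - lam * r x - \<epsilon> * r x * (1 - r x) + M * (norm (P x))\<^sup>2" for x
  define K where "K = {x. 0 \<le> r x \<and> r x \<le> 1 \<and> norm (P x) \<le> \<rho>}"
  have KS: "K \<subseteq> S"
  proof
    fix x assume "x \<in> K"
    then have "a + r x *\<^sub>R h + P x \<in> S" using Sin by (auto simp: K_def)
    then show "x \<in> S" using decomp[of x] by simp
  qed
  have contr: "continuous_on UNIV r" unfolding r_def using nh by (intro continuous_intros) auto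
  have contP: "continuous_on UNIV P" unfolding P_def using contr by (intro continuous_intros) auto
  have "closed K" unfolding K_def
    by (intro closed_Collect_conj closed_Collect_le continuous_intros contr contP)
  moreover have "bounded K"
    unfolding bounded_iff
  proof (intro exI ballI)
    fix x assume x: "x \<in> K"
    have "norm x = norm (a + r x *\<^sub>R h + P x)" using decomp[of x] by simp
    also have "\<dots> \<le> norm a + norm (r x *\<^sub>R h) + norm (P x)" by (meson norm_triangle_le norm_triangle_ineq add_right_mono)
    also have "norm (r x *\<^sub>R h) \<le> norm h" using x by (auto simp: K_def mult_left_le_one_le)
    finally show "norm x \<le> norm a + norm h + \<rho>" using x by (auto simp: K_def)
  qed
  ultimately have Kc: "compact K" by (simp add: compact_eq_bounded_closed)
  have contpS: "continuous_on S p" using lip by (rule lipschitz_on_continuous_on)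
  have contq: "continuous_on K q" unfolding q_def
    by (intro continuous_intros continuous_on_subset[OF contpS KS]
        continuous_on_subset[OF contr] continuous_on_subset[OF contP]) auto
  have r_a: "r a = 0" by (simp add: r_def)
  have P_a: "P a = 0" by (simp add: P_def r_a)
  have aK: "a \<in> K" using rho by (simp add: K_def r_a P_a)
  obtain xs where xsK: "xs \<in> K" and xmin: "\<And>y. y \<in> K \<Longrightarrow> q xs \<le> q y"
    using continuous_attains_inf[OF Kc _ contq] aK by blast
  define m where "m = a + (1/2) *\<^sub>R h"
  have r_m: "r m = 1/2" using r_lin[of "1/2" 0] by (simp add: m_def)
  have P_m: "P m = 0" using P_lin[of 0 "1/2"] by (simp add: m_def)
  have mK: "m \<in> K" using rho by (simp add: K_def r_m P_m)
  have "q m = p m - lam / 2 - \<epsilon> / 4" by (simp add: q_def r_m P_m)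
  also have "\<dots> \<le> p a - \<epsilon> / 4" proof -
    have gen: "\<And>X A B e::real. X \<le> (A + B) / 2 \<Longrightarrow> X - (B - A) / 2 - e / 4 \<le> A - e / 4" by (simp add: field_simps)
    show ?thesis unfolding m_def lam_def by (rule gen[OF mid])
  qed
  finally have qxs: "q xs \<le> p a - \<epsilon> / 4" using xmin[OF mK] by linarith
  define t where "t = r xs"
  define y where "y = P xs"
  have xs_eq: "xs = a + t *\<^sub>R h + y" using decomp[of xs] by (simp add: t_def y_def)
  have t01: "0 \<le> t" "t \<le> 1" and ny: "norm y \<le> \<rho>" using xsK by (auto simp: K_def t_def y_def)
  have yh: "inner y h = 0" using Ph by (simp add: y_def)
  have xsS: "xs \<in> S" using xsK KS by blast
  have qxs_eq: "q xs = p xs - lam * t - \<epsilon> * t * (1 - t) + M * (norm y)\<^sup>2"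
    by (simp add: q_def t_def y_def)
  have nyl: "norm y < \<rho>"
  proof (rule ccontr)
    assume "\<not> norm y < \<rho>"
    then have nyr: "norm y = \<rho>" using ny by simp
    define x' where "x' = a + t *\<^sub>R h"
    have r_x': "r x' = t" using r_lin[of t 0] by (simp add: x'_def)
    have P_x': "P x' = 0" using P_lin[of 0 t] by (simp add: x'_def)
    have x'K: "x' \<in> K" using t01 rho by (simp add: K_def r_x' P_x')
    have "norm (p x' - p xs) \<le> Lp * norm (x' - xs)"
      by (rule lipschitz_on_normD[OF lip KS[THEN subsetD, OF x'K] xsS])
    then have "p x' - p xs \<le> Lp * norm (x' - xs)" by (simp add: abs_le_iff)
    also have "norm (x' - xs) = \<rho>" using nyr by (simp add: x'_def xs_eq)
    finally have pp: "p x' - p xs \<le> Lp * \<rho>" .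
    have "q x' = p x' - lam * t - \<epsilon> * t * (1 - t)" by (simp add: q_def r_x' P_x')
    moreover have "M * (norm y)\<^sup>2 > Lp * \<rho>"
      using Mrho rho nyr by (simp add: power2_eq_square mult.assoc[symmetric] mult_strict_right_mono)
    ultimately have "q xs > q x'" using qxs_eq pp by linarith
    then show False using xmin[OF x'K] by linarith
  qed
  have tpos: "t > 0"
  proof (rule ccontr)
    assume "\<not> t > 0"
    then have t0: "t = 0" using t01 by simp
    have qe: "q xs = p (a + y) + M * (norm y)\<^sup>2" using qxs_eq xs_eq t0 by simp
    have "a \<in> S" using Sin[of 0 0] rho by simp
    moreover have "a + y \<in> S" using Sin[of 0 y] ny by simp
    ultimately have "norm (p a - p (a + y)) \<le> Lp * norm (a - (a + y))"
      by (rule lipschitz_on_normD[OF lip])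
    then have "p a - p (a + y) \<le> Lp * norm y" by (simp add: abs_le_iff)
    moreover have "M * (norm y)\<^sup>2 - Lp * norm y > - \<epsilon> / 4" by (rule quad_lemma[OF M0 Meps])
    ultimately have "q xs > p a - \<epsilon> / 4" using qe by linarith
    then show False using qxs by linarith
  qed
  have tl1: "t < 1"
  proof (rule ccontr)
    assume "\<not> t < 1"
    then have t1: "t = 1" using t01 by simp
    have qe: "q xs = p (a + h + y) - lam + M * (norm y)\<^sup>2" using qxs_eq xs_eq t1 by simp
    have "a + h \<in> S" using Sin[of 1 0] rho by simp
    moreover have "a + h + y \<in> S" using Sin[of 1 y] ny by simp
    ultimately have "norm (p (a + h) - p (a + h + y)) \<le> Lp * norm ((a + h) - (a + h + y))"
      by (rule lipschitz_on_normD[OF lip])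
    then have "p (a + h) - p (a + h + y) \<le> Lp * norm y" by (simp add: abs_le_iff)
    moreover have "M * (norm y)\<^sup>2 - Lp * norm y > - \<epsilon> / 4" by (rule quad_lemma[OF M0 Meps])
    ultimately have "q xs > p a - \<epsilon> / 4" using qe by (simp add: lam_def)
    then show False using qxs by linarith
  qed
  define Oo where "Oo = {x. 0 < r x \<and> r x < 1 \<and> norm (P x) < \<rho>}"
  have "open Oo" unfolding Oo_def
    by (intro open_Collect_conj open_Collect_less continuous_intros contr contP)
  moreover have "xs \<in> Oo" using tpos tl1 nyl by (simp add: Oo_def t_def y_def)
  ultimately obtain \<delta> where d: "\<delta> > 0" "ball xs \<delta> \<subseteq> Oo" using open_contains_ball by blast
  have OK: "Oo \<subseteq> K" by (auto simp: Oo_def K_def)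
  define w where "w = ((lam + \<epsilon> * (1 - 2 * t)) / nh) *\<^sub>R h - (2 * M) *\<^sub>R y"
  define C where "C = \<epsilon> / nh + M"
  have prox: "p z - p xs \<ge> inner w (z - xs) - C * (norm (z - xs))\<^sup>2" if z: "dist z xs < \<delta>" for z
  proof -
    have zK: "z \<in> K" using z d OK by (auto simp: dist_commute)
    have qq: "q xs \<le> q z" using xmin[OF zK] .
    define D where "D = z - xs"
    define dr where "dr = inner D h / nh"
    define dP where "dP = D - dr *\<^sub>R h"
    have rz: "r z = t + dr"
      using nh by (simp add: r_def t_def dr_def D_def inner_diff_left field_simps)
    have Pz: "P z = y + dP"
      by (simp add: P_def y_def dP_def D_def rz t_def algebra_simps)
    have dPh: "inner dP h = 0" using nh by (simp add: dP_def dr_def nh_def inner_diff_left)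
    have yD: "inner y dP = inner y D" using yh by (simp add: dP_def inner_diff_right inner_commute)
    have nPz: "(norm (P z))\<^sup>2 = (norm y)\<^sup>2 + 2 * inner y D + (norm dP)\<^sup>2"
    proof -
      have "(norm (P z))\<^sup>2 = inner (y + dP) (y + dP)" by (simp add: Pz power2_norm_eq_inner)
      also have "\<dots> = inner y y + 2 * inner y dP + inner dP dP"
        by (simp add: inner_add_left inner_add_right inner_commute[of dP y])
      finally show ?thesis by (simp add: yD power2_norm_eq_inner)
    qed
    have nD: "(norm D)\<^sup>2 = (norm dP)\<^sup>2 + dr\<^sup>2 * nh"
    proof -
      have "D = dP + dr *\<^sub>R h" by (simp add: dP_def)
      then have "(norm D)\<^sup>2 = inner (dP + dr *\<^sub>R h) (dP + dr *\<^sub>R h)" by (simp add: power2_norm_eq_inner)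
      also have "\<dots> = inner dP dP + 2 * dr * inner dP h + dr * dr * inner h h"
        by (simp add: inner_add_left inner_add_right inner_commute algebra_simps)
      finally show ?thesis using dPh by (simp add: power2_norm_eq_inner[symmetric] nh_def power2_eq_square)
    qed
    have drb: "dr\<^sup>2 \<le> (norm D)\<^sup>2 / nh"
    proof -
      have "dr\<^sup>2 * nh \<le> (norm D)\<^sup>2" using nD by simp
      then show ?thesis using nh by (simp add: field_simps)
    qed
    have dPb: "(norm dP)\<^sup>2 \<le> (norm D)\<^sup>2" using nD nh by simp
    have iw: "inner w D = (lam + \<epsilon> * (1 - 2 * t)) * dr - 2 * M * inner y D"
      by (simp add: w_def dr_def inner_diff_left inner_commute[of _ D] inner_diff_right)
    have q_z: "q z = p z - lam * (t + dr) - \<epsilon> * (t + dr) * (1 - (t + dr)) + M * ((norm y)\<^sup>2 + 2 * inner y D + (norm dP)\<^sup>2)"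
      by (simp add: q_def rz nPz)
    have key: "p z - p xs = inner w D - \<epsilon> * dr\<^sup>2 - M * (norm dP)\<^sup>2 + (q z - q xs)"
      by (simp add: q_z qxs_eq iw power2_eq_square algebra_simps)
    have "\<epsilon> * dr\<^sup>2 \<le> \<epsilon> * ((norm D)\<^sup>2 / nh)" by (rule mult_left_mono[OF drb]) (use eps in simp)
    moreover have "M * (norm dP)\<^sup>2 \<le> M * (norm D)\<^sup>2" by (rule mult_left_mono[OF dPb]) (use M0 in simp)
    moreover have "C * (norm D)\<^sup>2 = \<epsilon> * ((norm D)\<^sup>2 / nh) + M * (norm D)\<^sup>2" by (simp add: C_def algebra_simps)
    ultimately show ?thesis using key qq by (simp add: D_def)
  qed
  have "c \<le> inner w h" by (rule H[OF xsS d(1) prox])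
  also have "inner w h = lam + \<epsilon> * (1 - 2 * t)"
    using nh yh by (simp add: w_def nh_def inner_diff_left)
  also have "\<dots> < lam + \<epsilon>" using eps tpos by (simp add: mult_less_cancel_left)
  also have "\<dots> < c" using lc by (simp add: \<epsilon>_def field_simps)
  finally have "c < c" .
  then show False by simp
qed

lemma dir_lemma:
  fixes f :: "'a::euclidean_space \<Rightarrow> 'a"
  assumes d1: "\<delta>1 > 0"
    and HRN: "\<And>x w v. dist x xb < \<delta>1 \<Longrightarrow> RN f x w v \<Longrightarrow> inner w v \<ge> \<kappa> * (norm v)\<^sup>2"
    and lip: "L-lipschitz_on (ball xb \<delta>1) f"
    and a: "a \<in> ball xb (\<delta>1/2)" and au: "a + u \<in> ball xb (\<delta>1/2)" and u0: "u \<noteq> 0"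
    and mid: "inner u (f (a + (1/2) *\<^sub>R u)) \<le> (inner u (f a) + inner u (f (a + u))) / 2"
  shows "\<kappa> * (norm u)\<^sup>2 \<le> inner u (f (a + u)) - inner u (f a)"
proof -
  have rho: "0 < \<delta>1 / 4" using d1 by simp
  have Sin: "a + t *\<^sub>R u + y \<in> ball xb \<delta>1" if t: "0 \<le> t" "t \<le> 1" and y: "norm y \<le> \<delta>1 / 4" for t y
  proof -
    have "a + t *\<^sub>R u = (1 - t) *\<^sub>R a + t *\<^sub>R (a + u)" by (simp add: algebra_simps)
    also have "\<dots> \<in> ball xb (\<delta>1/2)"
      by (rule convexD[OF convex_ball a au]) (use t in auto)
    finally have d2: "dist xb (a + t *\<^sub>R u) < \<delta>1/2" by (simp only: mem_ball)
    have "dist (a + t *\<^sub>R u) (a + t *\<^sub>R u + y) = norm y" by (simp add: dist_norm)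
    then have "dist xb (a + t *\<^sub>R u + y) < \<delta>1/2 + \<delta>1/4"
      using dist_triangle[of xb "a + t *\<^sub>R u + y" "a + t *\<^sub>R u"] y d2 by linarith
    then have "dist xb (a + t *\<^sub>R u + y) < \<delta>1" using d1 by linarith
    then show ?thesis by (simp only: mem_ball)
  qed
  have lipp: "(norm u * L)-lipschitz_on (ball xb \<delta>1) (\<lambda>x. inner u (f x))"
  proof (rule lipschitz_onI)
    show "0 \<le> norm u * L" using lipschitz_on_nonneg[OF lip] by simp
    fix x y assume xy: "x \<in> ball xb \<delta>1" "y \<in> ball xb \<delta>1"
    have "dist (inner u (f x)) (inner u (f y)) = \<bar>inner u (f x - f y)\<bar>" by (simp add: dist_real_def inner_diff_right)
    also have "\<dots> \<le> norm u * norm (f x - f y)" by (rule Cauchy_Schwarz_ineq2)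
    also have "\<dots> \<le> norm u * (L * norm (x - y))"
      by (rule mult_left_mono[OF lipschitz_on_normD[OF lip xy]]) simp
    finally show "dist (inner u (f x)) (inner u (f y)) \<le> norm u * L * dist x y" by (simp add: dist_norm mult.assoc)
  qed
  have Hp: "\<kappa> * (norm u)\<^sup>2 \<le> inner w u"
    if x: "x \<in> ball xb \<delta>1" and d: "0 < \<delta>"
      and pr: "\<And>y. dist y x < \<delta> \<Longrightarrow> inner w (y - x) - C * (norm (y - x))\<^sup>2 \<le> inner u (f y) - inner u (f x)" for x w C \<delta>
  proof -
    have rn: "RN f x w u" by (rule prox_RN[OF d pr])
    have dx: "dist x xb < \<delta>1" using x by (simp add: dist_commute)
    show ?thesis by (rule HRN[OF dx rn])
  qed
  show ?thesis
    by (rule cyl[where p = "\<lambda>x. inner u (f x)" and h = u and a = a and S = "ball xb \<delta>1" and \<rho> = "\<delta>1/4"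
          and Lp = "norm u * L" and c = "\<kappa> * (norm u)\<^sup>2", OF u0 rho Sin lipp Hp mid])
qed

lemma strong_mono_local:
  fixes f :: "'a::euclidean_space \<Rightarrow> 'a"
  assumes d1: "\<delta>1 > 0"
    and HRN: "\<And>x w v. dist x xb < \<delta>1 \<Longrightarrow> RN f x w v \<Longrightarrow> inner w v \<ge> \<kappa> * (norm v)\<^sup>2"
    and lip: "L-lipschitz_on (ball xb \<delta>1) f"
    and a: "a \<in> ball xb (\<delta>1/2)" and b: "b \<in> ball xb (\<delta>1/2)"
  shows "inner (f b - f a) (b - a) \<ge> \<kappa> * (norm (b - a))\<^sup>2"
proof (cases "b = a")
  case True then show ?thesis by simp
next
  case False
  define h where "h = b - a"
  have h0: "h \<noteq> 0" using False by (simp add: h_def)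
  have bh: "b = a + h" by (simp add: h_def)
  have eq: "inner (f b - f a) (b - a) = inner h (f b) - inner h (f a)"
    unfolding h_def[symmetric] by (subst inner_commute) (rule inner_diff_right)
  show ?thesis
  proof (cases "inner h (f (a + (1/2) *\<^sub>R h)) \<le> (inner h (f a) + inner h (f (a + h))) / 2")
    case True
    have "\<kappa> * (norm h)\<^sup>2 \<le> inner h (f (a + h)) - inner h (f a)"
      by (rule dir_lemma[OF d1 HRN lip a _ h0 True]) (use b bh in simp_all)
    then have "\<kappa> * (norm h)\<^sup>2 \<le> inner h (f b) - inner h (f a)" by (simp only: bh)
    then show ?thesis unfolding eq unfolding h_def[symmetric] .
  next
    case False
    have hh: "(1/2) *\<^sub>R h + (1/2) *\<^sub>R h = h" by (simp add: scaleR_left_distrib[symmetric])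
    have m: "b + (1/2) *\<^sub>R (- h) = a + (1/2) *\<^sub>R h" using hh by (simp add: bh algebra_simps)
    have bmh: "b + - h = a" by (simp add: bh)
    have mid: "inner (- h) (f (b + (1/2) *\<^sub>R (- h))) \<le> (inner (- h) (f b) + inner (- h) (f (b + - h))) / 2"
      using False unfolding m bmh by (simp add: bh)
    have "\<kappa> * (norm (- h))\<^sup>2 \<le> inner (- h) (f (b + - h)) - inner (- h) (f b)"
      by (rule dir_lemma[OF d1 HRN lip b _ _ mid]) (use a bmh h0 in simp_all)
    then have "\<kappa> * (norm h)\<^sup>2 \<le> inner h (f b) - inner h (f a)" unfolding bmh by simp
    then show ?thesis unfolding eq unfolding h_def[symmetric] .
  qed
qed

lemma VI_argmin:
  fixes \<phi> :: "'a::euclidean_space \<Rightarrow> real"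
  assumes diff: "\<forall>x. \<phi> differentiable (at x)"
    and x: "x \<in> tilt_argmin \<phi> xb \<gamma> v" and y: "y \<in> cball xb \<gamma>"
  shows "inner (grad \<phi> x - v) (y - x) \<ge> 0"
proof (rule ccontr)
  assume neg: "\<not> ?thesis"
  define d where "d = y - x"
  define g where "g t = \<phi> (x + t *\<^sub>R d) - inner v (x + t *\<^sub>R d)" for t
  have A: "((\<lambda>t. \<phi> (x + t *\<^sub>R d)) has_real_derivative inner (grad \<phi> (x + 0 *\<^sub>R d)) d) (at 0)"
    by (rule line_deriv[OF diff])
  have "(\<lambda>t. inner v (x + t *\<^sub>R d)) = (\<lambda>t. inner v x + t * inner v d)" by (simp add: inner_add_right)
  moreover have "((\<lambda>t. inner v x + t * inner v d) has_real_derivative inner v d) (at 0)"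
    by (auto intro!: derivative_eq_intros)
  ultimately have B: "((\<lambda>t. inner v (x + t *\<^sub>R d)) has_real_derivative inner v d) (at 0)" by simp
  have "(g has_real_derivative (inner (grad \<phi> x) d - inner v d)) (at 0)"
    using DERIV_diff[OF A B] by (simp add: g_def[abs_def])
  moreover have "inner (grad \<phi> x) d - inner v d < 0" using neg by (simp add: d_def inner_diff_left)
  ultimately obtain e where e: "e > 0" and dec: "\<And>h. h > 0 \<Longrightarrow> h < e \<Longrightarrow> g 0 > g (0 + h)"
    using DERIV_neg_dec_right by blast
  define s where "s = min (e/2) 1"
  have s: "0 < s" "s < e" "s \<le> 1" using e by (auto simp: s_def)
  have xc: "x \<in> cball xb \<gamma>" using x by (simp add: tilt_argmin_def)
  have "(1 - s) *\<^sub>R x + s *\<^sub>R y \<in> cball xb \<gamma>"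
    by (rule convexD[OF convex_cball xc y]) (use s in auto)
  moreover have "(1 - s) *\<^sub>R x + s *\<^sub>R y = x + s *\<^sub>R d" by (simp add: d_def algebra_simps)
  ultimately have "x + s *\<^sub>R d \<in> cball xb \<gamma>" by simp
  then have "g 0 \<le> g s" using x by (simp add: tilt_argmin_def g_def)
  moreover have "g 0 > g s" using dec[OF s(1) s(2)] by simp
  ultimately show False by simp
qed

lemma VI_compare:
  fixes \<phi> :: "'a::euclidean_space \<Rightarrow> real"
  assumes x1: "x1 \<in> cball xb \<gamma>" and x2: "x2 \<in> cball xb \<gamma>"
    and VI1: "\<And>y. y \<in> cball xb \<gamma> \<Longrightarrow> inner (grad \<phi> x1 - v1) (y - x1) \<ge> 0"
    and VI2: "\<And>y. y \<in> cball xb \<gamma> \<Longrightarrow> inner (grad \<phi> x2 - v2) (y - x2) \<ge> 0"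
    and SM: "\<And>a b. a \<in> cball xb \<gamma> \<Longrightarrow> b \<in> cball xb \<gamma> \<Longrightarrow> inner (grad \<phi> b - grad \<phi> a) (b - a) \<ge> \<kappa> * (norm (b - a))\<^sup>2"
  shows "\<kappa> * (norm (x2 - x1))\<^sup>2 \<le> inner (v2 - v1) (x2 - x1)"
proof -
  have 1: "inner (grad \<phi> x1 - v1) (x2 - x1) \<ge> 0" by (rule VI1[OF x2])
  have 2: "inner (grad \<phi> x2 - v2) (x1 - x2) \<ge> 0" by (rule VI2[OF x1])
  have 3: "inner (grad \<phi> x2 - grad \<phi> x1) (x2 - x1) \<ge> \<kappa> * (norm (x2 - x1))\<^sup>2" by (rule SM[OF x1 x2])
  have "inner (grad \<phi> x2 - v2) (x1 - x2) = - inner (grad \<phi> x2 - v2) (x2 - x1)"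
    by (metis inner_minus_right minus_diff_eq)
  then have "inner (grad \<phi> x1 - v1) (x2 - x1) + (- inner (grad \<phi> x2 - v2) (x2 - x1)) \<ge> 0" using 1 2 by linarith
  moreover have "inner (grad \<phi> x1 - v1) (x2 - x1) - inner (grad \<phi> x2 - v2) (x2 - x1)
      = inner (v2 - v1) (x2 - x1) - inner (grad \<phi> x2 - grad \<phi> x1) (x2 - x1)"
    by (simp add: inner_diff_left)
  ultimately show ?thesis using 3 by linarith
qed

lemma tilt_from_sm:
  fixes \<phi> :: "'a::euclidean_space \<Rightarrow> real"
  assumes diff: "\<forall>x. \<phi> differentiable (at x)"
    and g0: "grad \<phi> xb = 0" and gam: "\<gamma> > 0" and kap: "\<kappa> > 0"
    and SM: "\<And>a b. a \<in> cball xb \<gamma> \<Longrightarrow> b \<in> cball xb \<gamma> \<Longrightarrow> inner (grad \<phi> b - grad \<phi> a) (b - a) \<ge> \<kappa> * (norm (b - a))\<^sup>2"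
  shows "tilt_stable_local_min \<phi> xb"
proof -
  let ?A = "tilt_argmin \<phi> xb \<gamma>"
  have ne: "\<exists>x. x \<in> ?A v" for v
  proof -
    have "continuous_on (cball xb \<gamma>) (\<lambda>y. \<phi> y - inner v y)"
      by (intro continuous_intros phi_cont[OF diff])
    moreover have "cball xb \<gamma> \<noteq> {}" using gam by simp
    ultimately have "\<exists>x\<in>cball xb \<gamma>. \<forall>y\<in>cball xb \<gamma>. \<phi> x - inner v x \<le> \<phi> y - inner v y"
      using continuous_attains_inf[OF compact_cball] by blast
    then show ?thesis by (auto simp: tilt_argmin_def)
  qed
  define m where "m v = (SOME x. x \<in> ?A v)" for v
  have mA: "m v \<in> ?A v" for v unfolding m_def using ne[of v] by (rule someI_ex)
  have mc: "m v \<in> cball xb \<gamma>" for v using mA[of v] by (simp add: tilt_argmin_def)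
  have cmp: "\<kappa> * (norm (x2 - x1))\<^sup>2 \<le> inner (v2 - v1) (x2 - x1)"
    if "x1 \<in> ?A v1" "x2 \<in> ?A v2" for x1 x2 v1 v2
  proof -
    have c1: "x1 \<in> cball xb \<gamma>" and c2: "x2 \<in> cball xb \<gamma>" using that by (simp_all add: tilt_argmin_def)
    show ?thesis by (rule VI_compare[OF c1 c2 VI_argmin[OF diff that(1)] VI_argmin[OF diff that(2)] SM])
  qed
  have single: "?A v = {m v}" for v
  proof
    show "{m v} \<subseteq> ?A v" using mA by simp
    show "?A v \<subseteq> {m v}"
    proof
      fix x assume x: "x \<in> ?A v"
      have "\<kappa> * (norm (m v - x))\<^sup>2 \<le> 0" using cmp[OF x mA[of v]] by simp
      then have "norm (m v - x) = 0" using kap by (simp add: mult_le_0_iff)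
      then show "x \<in> {m v}" by simp
    qed
  qed
  have lip: "(1 / \<kappa>)-lipschitz_on UNIV m"
  proof (rule lipschitz_onI)
    show "0 \<le> 1 / \<kappa>" using kap by simp
    fix v1 v2 :: 'a
    have c: "\<kappa> * (norm (m v2 - m v1))\<^sup>2 \<le> inner (v2 - v1) (m v2 - m v1)" by (rule cmp[OF mA mA])
    also have "\<dots> \<le> norm (v2 - v1) * norm (m v2 - m v1)" by (rule Cauchy_Schwarz_ineq2[THEN abs_le_D1])
    finally have c2: "\<kappa> * (norm (m v2 - m v1) * norm (m v2 - m v1)) \<le> norm (v2 - v1) * norm (m v2 - m v1)"
      by (simp add: power2_eq_square)
    have "\<kappa> * norm (m v2 - m v1) \<le> norm (v2 - v1)"
    proof (cases "norm (m v2 - m v1) = 0")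
      case True then show ?thesis by simp
    next
      case False
      then have pos: "norm (m v2 - m v1) > 0" by simp
      have "(\<kappa> * norm (m v2 - m v1)) * norm (m v2 - m v1) \<le> norm (v2 - v1) * norm (m v2 - m v1)"
        using c2 by (simp add: mult.assoc)
      then show ?thesis using pos by simp
    qed
    then have "norm (m v2 - m v1) \<le> norm (v2 - v1) / \<kappa>" using kap by (simp add: field_simps)
    then show "dist (m v1) (m v2) \<le> 1 / \<kappa> * dist v1 v2" by (simp add: dist_norm norm_minus_commute)
  qed
  have xbc: "xb \<in> cball xb \<gamma>" using gam by simp
  have VIxb: "\<And>y. y \<in> cball xb \<gamma> \<Longrightarrow> inner (grad \<phi> xb - 0) (y - xb) \<ge> 0" using g0 by simp
  have "m 0 = xb"
  proof -
    have "\<kappa> * (norm (xb - m 0))\<^sup>2 \<le> inner (0 - 0) (xb - m 0)"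
      by (rule VI_compare[OF mc xbc VI_argmin[OF diff mA] VIxb SM])
    then have "norm (xb - m 0) = 0" using kap by (simp add: mult_le_0_iff)
    then show ?thesis by simp
  qed
  then have A0: "?A 0 = {xb}" using single[of 0] by simp
  have sv: "\<forall>v\<in>UNIV. ?A v = {m v}" using single by blast
  have "open (UNIV::'a set)" "(0::'a) \<in> UNIV" by auto
  then have "open (UNIV::'a set) \<and> (0::'a) \<in> UNIV \<and> (\<forall>v\<in>UNIV. ?A v = {m v}) \<and> (1/\<kappa>)-lipschitz_on UNIV m \<and> ?A 0 = {xb}"
    using sv lip A0 by blast
  then show ?thesis unfolding tilt_stable_local_min_def using gam by blast
qed

lemma unif_lip:
  fixes f :: "'a::euclidean_space \<Rightarrow> 'b::real_normed_vector"
  assumes loclip: "\<forall>x. \<exists>U L. open U \<and> x \<in> U \<and> L-lipschitz_on U f" and X: "compact X"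
  shows "\<exists>L. L-lipschitz_on X f"
proof -
  have ll: "local_lipschitz {0::real} X (\<lambda>t. f)"
  proof (rule local_lipschitzI)
    fix t :: real and x assume "t \<in> {0}" "x \<in> X"
    obtain U L where U: "open U" "x \<in> U" "L-lipschitz_on U f" using loclip by blast
    obtain u where u: "u > 0" "cball x u \<subseteq> U" using open_contains_cball U by blast
    have "L-lipschitz_on (cball x u \<inter> X) f"
      by (rule lipschitz_on_subset[OF U(3)]) (use u in auto)
    then show "\<exists>u>0. \<exists>L. \<forall>t\<in>cball t u \<inter> {0}. L-lipschitz_on (cball x u \<inter> X) ((\<lambda>t. f) t)"
      using u by blast
  qed
  have "\<exists>L. \<forall>t\<in>{0::real}. L-lipschitz_on X ((\<lambda>t. f) t)"
    by (rule local_lipschitz_compact_implies_lipschitz[OF ll X compact_sing]) auto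
  then show ?thesis by blast
qed

lemma step_lemma:
  fixes \<phi> :: "'a::euclidean_space \<Rightarrow> real"
  assumes diff: "\<forall>x. \<phi> differentiable (at x)"
    and sig: "0 < \<sigma>" "\<sigma> < 1" and bet: "0 < \<beta>" "\<beta> < 1" and kap: "\<kappa> > 0" and L2: "L2 > 0"
    and xk: "norm xk \<le> R0" and Gb: "norm (grad \<phi> xk) \<le> G"
    and lipK: "L2-lipschitz_on (cball 0 (R0 + G / \<kappa>)) (grad \<phi>)"
    and F1: "\<And>u z. z \<in> second_subdiff \<phi> xk u \<Longrightarrow> inner z u \<ge> \<kappa> * (norm u)\<^sup>2"
    and F2: "\<And>u z. z \<in> second_subdiff \<phi> xk u \<Longrightarrow> norm z \<le> L2 * norm u"
    and st: "if grad \<phi> xk = 0 then xn = xk else (\<exists>d j. - grad \<phi> xk \<in> second_subdiff \<phi> xk d \<and>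
        armijo \<phi> \<sigma> \<beta> xk d j \<and> (\<forall>i<j. \<not> armijo \<phi> \<sigma> \<beta> xk d i) \<and> xn = xk + (\<beta> ^ j) *\<^sub>R d)"
  shows "\<phi> xn \<le> \<phi> xk - \<sigma> * \<kappa> * (norm (xn - xk))\<^sup>2 \<and>
    (norm (grad \<phi> xk))\<^sup>2 \<le> L2\<^sup>2 / (min 1 (\<beta> * (1 - \<sigma>) * \<kappa> / L2) * \<sigma> * \<kappa>) * (\<phi> xk - \<phi> xn)"
proof (cases "grad \<phi> xk = 0")
  case True
  then have "xn = xk" using st by simp
  then show ?thesis using True by simp
next
  case False
  define g where "g = grad \<phi> xk"
  define tmin where "tmin = min 1 (\<beta> * (1 - \<sigma>) * \<kappa> / L2)"
  have tmin0: "tmin > 0" using bet sig kap L2 by (simp add: tmin_def)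
  obtain d j where sub: "- g \<in> second_subdiff \<phi> xk d" and arm: "armijo \<phi> \<sigma> \<beta> xk d j"
    and narm: "\<And>i. i < j \<Longrightarrow> \<not> armijo \<phi> \<sigma> \<beta> xk d i" and upd: "xn = xk + (\<beta> ^ j) *\<^sub>R d"
    using st False by (auto simp: g_def)
  have k1: "inner (- g) d \<ge> \<kappa> * (norm d)\<^sup>2" using F1[OF sub] .
  have k2: "norm g \<le> L2 * norm d" using F2[OF sub] by simp
  have g0: "g \<noteq> 0" using False by (simp add: g_def)
  have d0: "d \<noteq> 0" using k2 g0 by auto
  have nd: "norm d > 0" using d0 by simp
  have "\<kappa> * (norm d * norm d) \<le> norm g * norm d"
    using k1 Cauchy_Schwarz_ineq2[of "- g" d] by (simp add: power2_eq_square)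
  then have "\<kappa> * norm d \<le> norm g" using nd by (simp add: mult.assoc[symmetric])
  then have "\<kappa> * norm d \<le> G" using Gb by (simp add: g_def)
  then have dG: "norm d \<le> G / \<kappa>" using kap by (simp add: field_simps)
  define \<tau> where "\<tau> = \<beta> ^ j"
  have tau: "0 < \<tau>" "\<tau> \<le> 1" using bet by (auto simp: \<tau>_def power_le_one)
  have gd: "inner g d \<le> - \<kappa> * (norm d)\<^sup>2" using k1 by simp
  have "\<phi> xn \<le> \<phi> xk + \<sigma> * \<tau> * inner g d" using arm by (simp add: armijo_def upd \<tau>_def g_def)
  also have "\<sigma> * \<tau> * inner g d \<le> \<sigma> * \<tau> * (- \<kappa> * (norm d)\<^sup>2)"
    by (rule mult_left_mono[OF gd]) (use sig tau in simp)
  finally have A': "\<phi> xn \<le> \<phi> xk - \<sigma> * \<kappa> * (\<tau> * (norm d)\<^sup>2)" by (simp add: algebra_simps)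
  have "(norm (xn - xk))\<^sup>2 = \<tau>\<^sup>2 * (norm d)\<^sup>2" using tau by (simp add: upd \<tau>_def power_mult_distrib)
  also have "\<dots> \<le> \<tau> * (norm d)\<^sup>2"
  proof -
    have "\<tau>\<^sup>2 \<le> \<tau>" using tau by (simp add: power2_eq_square mult_left_le_one_le)
    then show ?thesis by (rule mult_right_mono) simp
  qed
  finally have nx: "(norm (xn - xk))\<^sup>2 \<le> \<tau> * (norm d)\<^sup>2" .
  have "\<sigma> * \<kappa> * (norm (xn - xk))\<^sup>2 \<le> \<sigma> * \<kappa> * (\<tau> * (norm d)\<^sup>2)"
    by (rule mult_left_mono[OF nx]) (use sig kap in simp)
  then have A: "\<phi> xn \<le> \<phi> xk - \<sigma> * \<kappa> * (norm (xn - xk))\<^sup>2" using A' by linarith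
  have tauge: "\<tau> \<ge> tmin"
  proof (cases j)
    case 0 then show ?thesis by (simp add: \<tau>_def tmin_def)
  next
    case (Suc i)
    define t where "t = \<beta> ^ i"
    have t: "0 < t" using bet by (simp add: t_def)
    have na: "\<not> armijo \<phi> \<sigma> \<beta> xk d i" using narm Suc by simp
    then have fail: "\<phi> (xk + t *\<^sub>R d) > \<phi> xk + \<sigma> * t * inner g d" by (simp add: armijo_def t_def g_def)
    obtain s where s: "0 \<le> s" "s \<le> 1" and mv: "\<phi> (xk + t *\<^sub>R d) - \<phi> xk = inner (grad \<phi> (xk + s *\<^sub>R (t *\<^sub>R d))) (t *\<^sub>R d)"
      using phi_mvt[OF diff, of xk "t *\<^sub>R d"] by blast
    define \<xi> where "\<xi> = xk + s *\<^sub>R (t *\<^sub>R d)"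
    have t1: "t \<le> 1" using bet by (simp add: t_def power_le_one)
    have "t * inner (grad \<phi> \<xi>) d > t * (\<sigma> * inner g d)" using fail mv by (simp add: \<xi>_def algebra_simps)
    then have i1: "inner (grad \<phi> \<xi>) d > \<sigma> * inner g d" using t by simp
    have "(1 - \<sigma>) * (\<kappa> * (norm d)\<^sup>2) \<le> (1 - \<sigma>) * inner (- g) d"
      by (rule mult_left_mono[OF k1]) (use sig in simp)
    then have i2: "inner (grad \<phi> \<xi> - g) d > (1 - \<sigma>) * \<kappa> * (norm d)\<^sup>2"
      using i1 by (simp add: inner_diff_left algebra_simps)
    have st1: "s * t \<le> 1" using s t t1 by (simp add: mult_le_one)
    have nst: "norm (s *\<^sub>R (t *\<^sub>R d)) \<le> norm d"
    proof -
      have "norm (s *\<^sub>R (t *\<^sub>R d)) = (s * t) * norm d" using s t by simp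
      also have "\<dots> \<le> norm d" by (rule mult_left_le_one_le) (use s t st1 in auto)
      finally show ?thesis .
    qed
    have xiK: "\<xi> \<in> cball 0 (R0 + G / \<kappa>)"
    proof -
      have "norm \<xi> \<le> norm xk + norm (s *\<^sub>R (t *\<^sub>R d))" unfolding \<xi>_def by (rule norm_triangle_ineq)
      then show ?thesis using xk nst dG by simp
    qed
    have xkK: "xk \<in> cball 0 (R0 + G / \<kappa>)"
    proof -
      have "0 \<le> G / \<kappa>" using dG nd by linarith
      then show ?thesis using xk by simp
    qed
    have "inner (grad \<phi> \<xi> - g) d \<le> norm (grad \<phi> \<xi> - g) * norm d"
      using Cauchy_Schwarz_ineq2[of "grad \<phi> \<xi> - g" d] by simp
    also have "norm (grad \<phi> \<xi> - g) \<le> L2 * norm (\<xi> - xk)"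
      unfolding g_def by (rule lipschitz_on_normD[OF lipK xiK xkK])
    then have "norm (grad \<phi> \<xi> - g) * norm d \<le> L2 * norm (\<xi> - xk) * norm d"
      by (rule mult_right_mono) simp
    also have "norm (\<xi> - xk) = s * t * norm d" using s t by (simp add: \<xi>_def)
    finally have "inner (grad \<phi> \<xi> - g) d \<le> L2 * (s * t * norm d) * norm d" .
    also have "\<dots> \<le> L2 * (t * norm d) * norm d"
      using s t L2 nd by (intro mult_right_mono mult_left_mono) (auto simp: mult_le_cancel_right1)
    finally have "(1 - \<sigma>) * \<kappa> * (norm d)\<^sup>2 < (L2 * t) * (norm d)\<^sup>2"
      using i2 by (simp add: power2_eq_square algebra_simps)
    then have "(1 - \<sigma>) * \<kappa> < L2 * t" using nd by simp
    then have "(1 - \<sigma>) * \<kappa> / L2 < t" using L2 by (simp add: field_simps)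
    then have "\<beta> * ((1 - \<sigma>) * \<kappa> / L2) < \<beta> * t" by (rule mult_strict_left_mono[OF _ bet(1)])
    moreover have "\<tau> = \<beta> * t" by (simp add: \<tau>_def t_def Suc)
    ultimately show ?thesis by (simp add: tmin_def)
  qed
  have "tmin * (norm d)\<^sup>2 \<le> \<tau> * (norm d)\<^sup>2" by (rule mult_right_mono[OF tauge]) simp
  then have m1: "\<sigma> * \<kappa> * (tmin * (norm d)\<^sup>2) \<le> \<sigma> * \<kappa> * (\<tau> * (norm d)\<^sup>2)"
    by (rule mult_left_mono) (use sig kap in simp)
  have m2: "(norm d)\<^sup>2 * (tmin * \<sigma> * \<kappa>) \<le> \<phi> xk - \<phi> xn"
  proof -
    have "(norm d)\<^sup>2 * (tmin * \<sigma> * \<kappa>) = \<sigma> * \<kappa> * (tmin * (norm d)\<^sup>2)" by (simp add: algebra_simps)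
    then show ?thesis using m1 A' by linarith
  qed
  have pos: "tmin * \<sigma> * \<kappa> > 0" using tmin0 sig kap by simp
  have dd: "(norm d)\<^sup>2 \<le> (\<phi> xk - \<phi> xn) / (tmin * \<sigma> * \<kappa>)"
    using m2 pos by (simp add: pos_le_divide_eq)
  have "(norm g)\<^sup>2 \<le> (L2 * norm d)\<^sup>2" using k2 by (simp add: power_mono)
  also have "\<dots> = L2\<^sup>2 * (norm d)\<^sup>2" by (simp add: power_mult_distrib)
  also have "\<dots> \<le> L2\<^sup>2 * ((\<phi> xk - \<phi> xn) / (tmin * \<sigma> * \<kappa>))" by (rule mult_left_mono[OF dd]) simp
  also have "\<dots> = L2\<^sup>2 / (tmin * \<sigma> * \<kappa>) * (\<phi> xk - \<phi> xn)" by simp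
  finally have B: "(norm (grad \<phi> xk))\<^sup>2 \<le> L2\<^sup>2 / (tmin * \<sigma> * \<kappa>) * (\<phi> xk - \<phi> xn)" by (simp add: g_def)
  show ?thesis using A B by (simp add: tmin_def)
qed

theorem theorem3p7:
  fixes \<phi> :: "'a::euclidean_space \<Rightarrow> real" and x0 :: 'a and \<sigma> \<beta> :: real
  assumes "C11 \<phi>"
    and "0 < \<sigma>" and "\<sigma> < 1/2" and "0 < \<beta>" and "\<beta> < 1"
    and posdef: "\<forall>x\<in>{x. \<phi> x \<le> \<phi> x0}. \<forall>u z. u \<noteq> 0 \<and> z \<in> second_subdiff \<phi> x u \<longrightarrow> inner z u > 0"
    and bdd: "bounded {x. \<phi> x \<le> \<phi> x0}"
  shows "\<forall>x. gdna_sequence \<phi> \<sigma> \<beta> x0 x \<longrightarrow>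
           (\<exists>xb. x \<longlonglongrightarrow> xb \<and> tilt_stable_local_min \<phi> xb)"
proof (intro allI impI)
  fix x assume gs: "gdna_sequence \<phi> \<sigma> \<beta> x0 x"
  define \<Omega> where "\<Omega> = {x. \<phi> x \<le> \<phi> x0}"
  let ?f = "grad \<phi>"
  have sig: "0 < \<sigma>" "\<sigma> < 1" using assms by auto
  have bet: "0 < \<beta>" "\<beta> < 1" using assms by auto
  have diff: "\<forall>x. \<phi> differentiable (at x)" and contg: "continuous_on UNIV ?f"
    and loclip: "\<forall>x. \<exists>U L. open U \<and> x \<in> U \<and> L-lipschitz_on U ?f"
    using \<open>C11 \<phi>\<close> by (auto simp: C11_def)
  have "closed \<Omega>" unfolding \<Omega>_def
    by (rule closed_Collect_le[OF phi_cont[OF diff] continuous_on_const])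
  then have Oc: "compact \<Omega>" using bdd by (simp add: compact_eq_bounded_closed \<Omega>_def)
  have x0O: "x0 \<in> \<Omega>" by (simp add: \<Omega>_def)
  obtain R0 where R0: "\<And>y. y \<in> \<Omega> \<Longrightarrow> norm y \<le> R0"
    using bdd by (auto simp: bounded_iff \<Omega>_def)
  have R00: "R0 \<ge> 0" using R0[OF x0O] norm_ge_zero[of x0] by linarith
  define R1 where "R1 = R0 + 2"
  obtain L1 where L1: "L1-lipschitz_on (cball 0 R1) ?f"
    using unif_lip[OF loclip compact_cball] by blast
  have L1b: "L1-lipschitz_on (ball 0 R1) ?f" by (rule lipschitz_on_subset[OF L1]) auto
  have nearV: "x' \<in> ball 0 R1" if "y \<in> \<Omega>" "dist x' y < 1" for x' y
  proof -
    have "norm x' \<le> norm y + dist x' y" by (metis dist_norm norm_triangle_sub add.commute)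
    then show ?thesis using R0[OF that(1)] that(2) by (simp add: R1_def)
  qed
  obtain \<delta>1 \<kappa> where d1: "\<delta>1 > 0" and kap: "\<kappa> > 0"
    and HR: "\<And>x' y w v. y \<in> \<Omega> \<Longrightarrow> dist x' y < \<delta>1 \<Longrightarrow> RN ?f x' w v \<Longrightarrow> inner w v \<ge> \<kappa> * (norm v)\<^sup>2"
  proof -
    have posdefO: "\<forall>x\<in>\<Omega>. \<forall>u z. u \<noteq> 0 \<and> z \<in> second_subdiff \<phi> x u \<longrightarrow> inner z u > 0"
      using posdef by (simp add: \<Omega>_def)
    have nearV': "\<And>x' y. y \<in> \<Omega> \<Longrightarrow> dist x' y < 1 \<Longrightarrow> x' \<in> ball 0 R1" by (rule nearV)
    have "\<exists>\<delta>>0. \<exists>\<kappa>>0. \<forall>x y w v. y \<in> \<Omega> \<longrightarrow> dist x y < \<delta> \<longrightarrow> RN ?f x w v \<longrightarrow> inner w v \<ge> \<kappa> * (norm v)\<^sup>2"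
      by (rule unif_step1[OF contg Oc posdefO open_ball[of 0 R1] nearV' L1b])
    then show ?thesis using that by blast
  qed
  define \<delta> where "\<delta> = min \<delta>1 1"
  have d: "\<delta> > 0" "\<delta> \<le> \<delta>1" "\<delta> \<le> 1" using d1 by (auto simp: \<delta>_def)
  have "bounded (?f ` \<Omega>)"
    by (rule compact_imp_bounded[OF compact_continuous_image[OF continuous_on_subset[OF contg] Oc]]) simp
  then obtain G where G: "\<And>y. y \<in> \<Omega> \<Longrightarrow> norm (?f y) \<le> G" by (auto simp: bounded_iff)
  define R2 where "R2 = R0 + G / \<kappa>"
  obtain L2' where L2': "L2'-lipschitz_on (cball 0 (R2 + 1)) ?f"
    using unif_lip[OF loclip compact_cball] by blast
  define L2 where "L2 = L2' + 1"
  have L2: "L2 > 0" using lipschitz_on_nonneg[OF L2'] by (simp add: L2_def)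
  have L2l: "L2-lipschitz_on (cball 0 (R2 + 1)) ?f" by (rule lipschitz_on_le[OF L2']) (simp add: L2_def)
  have L2K: "L2-lipschitz_on (cball 0 (R0 + G / \<kappa>)) ?f" by (rule lipschitz_on_subset[OF L2l]) (auto simp: R2_def)
  have L2b: "L2-lipschitz_on (ball 0 (R2 + 1)) ?f" by (rule lipschitz_on_subset[OF L2l]) auto
  have F1: "inner z u \<ge> \<kappa> * (norm u)\<^sup>2" if "y \<in> \<Omega>" "z \<in> second_subdiff \<phi> y u" for y u z
  proof -
    have ln: "(z, - u) \<in> limiting_normal_cone (graph (\<lambda>y. {?f y})) (y, ?f y)"
      using that(2) by (simp add: second_subdiff_def coderivative_def)
    show ?thesis
    proof (rule LN_kappa[OF ln d1])
      fix y' w v assume "dist y' y < \<delta>1" "RN ?f y' w v"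
      then show "\<kappa> * (norm v)\<^sup>2 \<le> inner w v" using HR[OF that(1)] by blast
    qed
  qed
  have G0: "G \<ge> 0" using G[OF x0O] norm_ge_zero[of "?f x0"] by linarith
  have F2: "norm z \<le> L2 * norm u" if "y \<in> \<Omega>" "z \<in> second_subdiff \<phi> y u" for y u z
  proof -
    have ln: "(z, - u) \<in> limiting_normal_cone (graph (\<lambda>y. {?f y})) (y, ?f y)"
      using that(2) by (simp add: second_subdiff_def coderivative_def)
    have "G / \<kappa> \<ge> 0" using G0 kap by simp
    then have "norm y < R2 + 1" using R0[OF that(1)] unfolding R2_def by linarith
    then have "y \<in> ball 0 (R2 + 1)" by simp
    then show ?thesis using LN_bound[OF ln open_ball _ L2b] by blast
  qed
  define Cst where "Cst = L2\<^sup>2 / (min 1 (\<beta> * (1 - \<sigma>) * \<kappa> / L2) * \<sigma> * \<kappa>)"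
  have x00: "x 0 = x0" using gs by (simp add: gdna_sequence_def)
  have stall: "\<forall>k. if ?f (x k) = 0 then x (Suc k) = x k
          else (\<exists>d j. - ?f (x k) \<in> second_subdiff \<phi> (x k) d \<and>
                  armijo \<phi> \<sigma> \<beta> (x k) d j \<and> (\<forall>i<j. \<not> armijo \<phi> \<sigma> \<beta> (x k) d i) \<and>
                  x (Suc k) = x k + (\<beta> ^ j) *\<^sub>R d)"
    using gs unfolding gdna_sequence_def by (rule conjunct2)
  note st = spec[OF stall]
  have step: "\<phi> (x (Suc k)) \<le> \<phi> (x k) - \<sigma> * \<kappa> * (norm (x (Suc k) - x k))\<^sup>2 \<and>
      (norm (?f (x k)))\<^sup>2 \<le> Cst * (\<phi> (x k) - \<phi> (x (Suc k)))" if xk: "x k \<in> \<Omega>" for k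
    unfolding Cst_def
    by (rule step_lemma[OF diff sig bet kap L2 R0[OF xk] G[OF xk] L2K F1[OF xk] F2[OF xk] st])
  have xO: "x k \<in> \<Omega>" for k
  proof (induction k)
    case 0 then show ?case by (simp add: x00 x0O)
  next
    case (Suc k)
    have "\<phi> (x (Suc k)) \<le> \<phi> (x k)" using step[OF Suc] sig kap
      by (smt (verit) mult_nonneg_nonneg zero_le_power2)
    then show ?case using Suc by (simp add: \<Omega>_def)
  qed
  have stA: "\<phi> (x (Suc k)) \<le> \<phi> (x k) - \<sigma> * \<kappa> * (norm (x (Suc k) - x k))\<^sup>2" for k using step[OF xO] by blast
  have stB: "(norm (?f (x k)))\<^sup>2 \<le> Cst * (\<phi> (x k) - \<phi> (x (Suc k)))" for k using step[OF xO] by blast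
  have sk: "\<sigma> * \<kappa> > 0" using sig kap by simp
  have dec: "\<phi> (x (Suc k)) \<le> \<phi> (x k)" for k
    using stA[of k] sk by (smt (verit) mult_nonneg_nonneg zero_le_power2)
  obtain mlow where mlow: "\<And>y. y \<in> \<Omega> \<Longrightarrow> mlow \<le> \<phi> y"
  proof -
    have "\<exists>y\<in>\<Omega>. \<forall>z\<in>\<Omega>. \<phi> y \<le> \<phi> z"
      by (rule continuous_attains_inf[OF Oc _ phi_cont[OF diff]]) (use x0O in auto)
    then show ?thesis using that by blast
  qed
  have "decseq (\<lambda>k. \<phi> (x k))" using dec by (simp add: decseq_Suc_iff)
  then obtain Lphi where Lphi: "(\<lambda>k. \<phi> (x k)) \<longlonglongrightarrow> Lphi"
    using decseq_convergent[of "\<lambda>k. \<phi> (x k)" mlow] mlow xO by blast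
  have Dlim: "(\<lambda>k. \<phi> (x k) - \<phi> (x (Suc k))) \<longlonglongrightarrow> 0"
    using tendsto_diff[OF Lphi LIMSEQ_Suc[OF Lphi]] by simp
  have Cst0: "Cst \<ge> 0"
  proof -
    have "(norm (?f (x 0)))\<^sup>2 \<le> Cst * (\<phi> (x 0) - \<phi> (x (Suc 0)))" by (rule stB)
    have "min 1 (\<beta> * (1 - \<sigma>) * \<kappa> / L2) > 0" using bet sig kap L2 by simp
    then show ?thesis using sig kap by (simp add: Cst_def)
  qed
  have flim: "(\<lambda>k. ?f (x k)) \<longlonglongrightarrow> 0"
  proof (rule Lim_null_comparison)
    show "\<forall>\<^sub>F k in sequentially. norm (?f (x k)) \<le> sqrt (Cst * (\<phi> (x k) - \<phi> (x (Suc k))))"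
      using stB by (intro always_eventually allI) (metis real_le_rsqrt norm_ge_zero)
    have "(\<lambda>k. sqrt (Cst * (\<phi> (x k) - \<phi> (x (Suc k))))) \<longlonglongrightarrow> sqrt (Cst * 0)"
      by (intro tendsto_intros Dlim)
    then show "(\<lambda>k. sqrt (Cst * (\<phi> (x k) - \<phi> (x (Suc k))))) \<longlonglongrightarrow> 0" by simp
  qed
  have steplim: "(\<lambda>k. x (Suc k) - x k) \<longlonglongrightarrow> 0"
  proof (rule Lim_null_comparison)
    show "\<forall>\<^sub>F k in sequentially. norm (x (Suc k) - x k) \<le> sqrt ((\<phi> (x k) - \<phi> (x (Suc k))) / (\<sigma> * \<kappa>))"
    proof (intro always_eventually allI)
      fix k
      have "\<sigma> * \<kappa> * (norm (x (Suc k) - x k))\<^sup>2 \<le> \<phi> (x k) - \<phi> (x (Suc k))" using stA[of k] by linarith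
      then have "(norm (x (Suc k) - x k))\<^sup>2 \<le> (\<phi> (x k) - \<phi> (x (Suc k))) / (\<sigma> * \<kappa>)"
        using sk by (simp add: pos_le_divide_eq mult.commute)
      then show "norm (x (Suc k) - x k) \<le> sqrt ((\<phi> (x k) - \<phi> (x (Suc k))) / (\<sigma> * \<kappa>))"
        by (metis real_le_rsqrt norm_ge_zero)
    qed
    have "(\<lambda>k. sqrt ((\<phi> (x k) - \<phi> (x (Suc k))) / (\<sigma> * \<kappa>))) \<longlonglongrightarrow> sqrt (0 / (\<sigma> * \<kappa>))"
      by (intro tendsto_intros Dlim) (use sig kap in simp)
    then show "(\<lambda>k. sqrt ((\<phi> (x k) - \<phi> (x (Suc k))) / (\<sigma> * \<kappa>))) \<longlonglongrightarrow> 0" by simp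
  qed
  obtain xb r where xbO: "xb \<in> \<Omega>" and r: "strict_mono r" and xr: "(x \<circ> r) \<longlonglongrightarrow> xb"
    using compact_imp_seq_compact[OF Oc] xO unfolding seq_compact_def by blast
  have gxb: "?f xb = 0"
  proof -
    have "isCont ?f xb" using contg by (simp add: continuous_on_eq_continuous_at)
    then have "(\<lambda>n. ?f ((x \<circ> r) n)) \<longlonglongrightarrow> ?f xb" using xr by (rule isCont_tendsto_compose)
    moreover have "(\<lambda>n. ?f ((x \<circ> r) n)) \<longlonglongrightarrow> 0"
      using LIMSEQ_subseq_LIMSEQ[OF flim r] by (simp add: o_def)
    ultimately show ?thesis by (rule LIMSEQ_unique)
  qed
  have HRN: "\<And>x' w v. dist x' xb < \<delta> \<Longrightarrow> RN ?f x' w v \<Longrightarrow> inner w v \<ge> \<kappa> * (norm v)\<^sup>2"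
    using HR[OF xbO] d by (meson order_less_le_trans)
  have lipb: "L1-lipschitz_on (ball xb \<delta>) ?f"
  proof (rule lipschitz_on_subset[OF L1b])
    show "ball xb \<delta> \<subseteq> ball 0 R1"
    proof
      fix y assume "y \<in> ball xb \<delta>"
      then have "dist y xb < 1" using d by (simp add: dist_commute)
      then show "y \<in> ball 0 R1" by (rule nearV[OF xbO])
    qed
  qed
  have SM: "inner (?f b - ?f a) (b - a) \<ge> \<kappa> * (norm (b - a))\<^sup>2"
    if "a \<in> ball xb (\<delta>/2)" "b \<in> ball xb (\<delta>/2)" for a b
    by (rule strong_mono_local[OF d(1) HRN lipb that])
  define \<rho> where "\<rho> = \<delta> / 2"
  have rho: "\<rho> > 0" using d by (simp add: \<rho>_def)
  have E1: "\<kappa> * norm (y - xb) \<le> norm (?f y)" if "y \<in> ball xb \<rho>" for y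
  proof -
    have xbb: "xb \<in> ball xb (\<delta>/2)" using d by simp
    have "\<kappa> * (norm (y - xb))\<^sup>2 \<le> inner (?f y - ?f xb) (y - xb)"
      by (rule SM[OF xbb]) (use that in \<open>simp add: \<rho>_def\<close>)
    also have "\<dots> \<le> norm (?f y) * norm (y - xb)" using gxb Cauchy_Schwarz_ineq2[of "?f y" "y - xb"] by simp
    finally have "(\<kappa> * norm (y - xb)) * norm (y - xb) \<le> norm (?f y) * norm (y - xb)"
      by (simp add: power2_eq_square mult.assoc)
    then show ?thesis
      by (cases "norm (y - xb) = 0") (auto simp: mult_le_cancel_right)
  qed
  have ev1: "\<forall>\<^sub>F k in sequentially. norm (x (Suc k) - x k) < \<rho> / 2"
    using tendstoD[OF steplim, of "\<rho> / 2"] rho by (simp add: dist_norm)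
  have ev2: "\<forall>\<^sub>F k in sequentially. norm (?f (x k)) < \<kappa> * \<rho> / 2"
    using tendstoD[OF flim, of "\<kappa> * \<rho> / 2"] rho kap by (simp add: dist_norm)
  have "\<exists>N. \<forall>k\<ge>N. norm (x (Suc k) - x k) < \<rho> / 2 \<and> norm (?f (x k)) < \<kappa> * \<rho> / 2"
    using eventually_conj[OF ev1 ev2] unfolding eventually_sequentially .
  then obtain N where N: "\<And>k. k \<ge> N \<Longrightarrow> norm (x (Suc k) - x k) < \<rho> / 2 \<and> norm (?f (x k)) < \<kappa> * \<rho> / 2"
    by blast
  have ev3: "\<forall>\<^sub>F n in sequentially. dist (x (r n)) xb < \<rho> / 2"
    using tendstoD[OF xr, of "\<rho> / 2"] rho by (simp add: o_def)
  have "\<exists>M. \<forall>n\<ge>M. dist (x (r n)) xb < \<rho> / 2"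
    using ev3 unfolding eventually_sequentially .
  then obtain M where M: "\<And>n. n \<ge> M \<Longrightarrow> dist (x (r n)) xb < \<rho> / 2" by blast
  define n where "n = max M N"
  have n: "n \<ge> N" "dist (x (r n)) xb < \<rho> / 2" using M[of n] by (auto simp: n_def)
  define k0 where "k0 = r n"
  have k0N: "k0 \<ge> N" using n(1) strict_mono_imp_increasing[OF r, of n] by (simp add: k0_def)
  have inball: "dist (x m) xb < \<rho> / 2" if "m \<ge> k0" for m
    using that
  proof (induction m rule: dec_induct)
    case base then show ?case using n(2) by (simp add: k0_def)
  next
    case (step m)
    have mN: "m \<ge> N" using step.hyps k0N by simp
    have "dist (x (Suc m)) xb \<le> dist (x m) xb + norm (x (Suc m) - x m)"
      by (metis dist_norm dist_triangle2 dist_commute add.commute)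
    also have "\<dots> < \<rho> / 2 + \<rho> / 2" using step.IH N[OF mN] by linarith
    finally have "x (Suc m) \<in> ball xb \<rho>" by (simp add: dist_commute)
    then have "\<kappa> * norm (x (Suc m) - xb) \<le> norm (?f (x (Suc m)))" by (rule E1)
    also have "\<dots> < \<kappa> * \<rho> / 2" using N[of "Suc m"] mN by simp
    finally have "norm (x (Suc m) - xb) < \<rho> / 2" using kap by (simp add: field_simps)
    then show ?case by (simp add: dist_norm)
  qed
  have conv: "x \<longlonglongrightarrow> xb"
  proof (rule LIM_zero_cancel, rule Lim_null_comparison)
    show "\<forall>\<^sub>F m in sequentially. norm (x m - xb) \<le> norm (?f (x m)) / \<kappa>"
      unfolding eventually_sequentially
    proof (intro exI allI impI)
      fix m assume "m \<ge> k0"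
      then have "x m \<in> ball xb \<rho>" using inball[of m] rho by (simp add: dist_commute)
      then have "\<kappa> * norm (x m - xb) \<le> norm (?f (x m))" by (rule E1)
      then show "norm (x m - xb) \<le> norm (?f (x m)) / \<kappa>" using kap by (simp add: field_simps)
    qed
    have "(\<lambda>m. norm (?f (x m)) / \<kappa>) \<longlonglongrightarrow> norm (0::'a) / \<kappa>"
      by (intro tendsto_intros flim) (use kap in simp)
    then show "(\<lambda>m. norm (?f (x m)) / \<kappa>) \<longlonglongrightarrow> 0" by simp
  qed
  have gam: "\<delta> / 4 > 0" using d by simp
  have SM': "inner (?f b - ?f a) (b - a) \<ge> \<kappa> * (norm (b - a))\<^sup>2"
    if "a \<in> cball xb (\<delta>/4)" "b \<in> cball xb (\<delta>/4)" for a b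
    by (rule SM) (use that d in auto)
  have "tilt_stable_local_min \<phi> xb" by (rule tilt_from_sm[OF diff gxb gam kap SM'])
  then show "\<exists>xb. x \<longlonglongrightarrow> xb \<and> tilt_stable_local_min \<phi> xb" using conv by blast
qed

end
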